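(* Let $\varphi,g\in C(\mathbb{R})$ with $g$ non-strictly increasing, let $u$ be the entropy solution of $u_t+\varphi(u)_x-g(u)_{xx}=0$ in $\Pi=(0,+\infty)\times\mathbb{R}$ with a $1$-periodic initial function $u_0\in L^\infty(\mathbb{T})$, and $M=\|u\|_\infty$. Let $E\subset(0,+\infty)$ be the set of common Lebesgue points of all the functions $t\mapsto\int_{\mathbb{T}}p(u(t,x))f(x)\,dx$ with $p\in C([-M,M])$ and $f\in L^1(\mathbb{T})$. If $t_0\in E$, then $u(t,\cdot)\to u(t_0,\cdot)$ in $L^1(\mathbb{T})$ as $t\to t_0+$, $t\in E$.
   Context: $\mathbb{T}=\mathbb{R}/\mathbb{Z}$. A fixed representative of $u$ is used, so $u(t,\cdot)$ is defined for every $t$; $E$ has full measure. For $u_0\in L^\infty(\mathbb{R})$, an entropy solution of $u_t+\varphi(u)_x-g(u)_{xx}=0$, $u(0,\cdot)=u_0$, is $u\in L^\infty(\Pi)$ with $g(u)_x\in L^2_{loc}(\Pi)$, such that for every $k\in\mathbb{R}$ and every nonnegative $f\in C_0^\infty(\Pi)$: $\int_\Pi\{|u-k|f_t+\operatorname{sign}(u-k)(\varphi(u)-\varphi(k))f_x+|g(u)-g(k)|f_{xx}\}dtdx\ge0$, and $\operatorname*{ess\,lim}_{t\to0}u(t,\cdot)=u_0$ in $L^1_{loc}(\mathbb{R})$. It exists, is unique, and is $1$-periodic in $x$ if $u_0$ is. *)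

theory Defs
  imports "HOL-Analysis.Analysis"
begin

text \<open>Functions on Pi = (0,+inf) x R are curried: u t x. Points of the plane are pairs (t,x).\<close>

definition Pi_dom :: "(real \<times> real) set" where
  "Pi_dom = {0<..} \<times> UNIV"

definition pt :: "(real \<Rightarrow> real \<Rightarrow> real) \<Rightarrow> real \<Rightarrow> real \<Rightarrow> real" where
  "pt f t x = deriv (\<lambda>s. f s x) t"

definition px :: "(real \<Rightarrow> real \<Rightarrow> real) \<Rightarrow> real \<Rightarrow> real \<Rightarrow> real" where
  "px f t x = deriv (\<lambda>y. f t y) x"

definition test_fun :: "(real \<Rightarrow> real \<Rightarrow> real) \<Rightarrow> bool" where
  "test_fun f \<longleftrightarrow>
     (\<exists>D :: nat \<Rightarrow> nat \<Rightarrow> real \<Rightarrow> real \<Rightarrow> real.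
        D 0 0 = f \<and>
        (\<forall>i j t x. ((\<lambda>s. D i j s x) has_real_derivative D (Suc i) j t x) (at t) \<and>
                   ((\<lambda>y. D i j t y) has_real_derivative D i (Suc j) t x) (at x)) \<and>
        (\<forall>i j. continuous_on UNIV (\<lambda>z. D i j (fst z) (snd z)))) \<and>
     (\<exists>K. compact K \<and> K \<subseteq> Pi_dom \<and> (\<forall>t x. (t, x) \<notin> K \<longrightarrow> f t x = 0))"

definition Linf_Pi :: "(real \<Rightarrow> real \<Rightarrow> real) \<Rightarrow> bool" where
  "Linf_Pi u \<longleftrightarrow> set_borel_measurable lebesgue Pi_dom (\<lambda>z. u (fst z) (snd z)) \<and>
     (\<exists>C. AE z in lebesgue. z \<in> Pi_dom \<longrightarrow> \<bar>u (fst z) (snd z)\<bar> \<le> C)"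

definition ess_norm_Pi :: "(real \<Rightarrow> real \<Rightarrow> real) \<Rightarrow> real" where
  "ess_norm_Pi u = Inf {C. AE z in lebesgue. z \<in> Pi_dom \<longrightarrow> \<bar>u (fst z) (snd z)\<bar> \<le> C}"

definition weak_dx_L2loc :: "(real \<Rightarrow> real \<Rightarrow> real) \<Rightarrow> bool" where
  "weak_dx_L2loc w \<longleftrightarrow>
     (\<exists>v :: real \<Rightarrow> real \<Rightarrow> real.
        set_borel_measurable lebesgue Pi_dom (\<lambda>z. v (fst z) (snd z)) \<and>
        (\<forall>K. compact K \<and> K \<subseteq> Pi_dom \<longrightarrow>
              set_integrable lebesgue K (\<lambda>z. (v (fst z) (snd z))\<^sup>2)) \<and>
        (\<forall>f. test_fun f \<longrightarrow>
           (LINT z:Pi_dom|lebesgue. w (fst z) (snd z) * px f (fst z) (snd z))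
             = - (LINT z:Pi_dom|lebesgue. v (fst z) (snd z) * f (fst z) (snd z))))"

definition entropy_solution ::
  "(real \<Rightarrow> real) \<Rightarrow> (real \<Rightarrow> real) \<Rightarrow> (real \<Rightarrow> real) \<Rightarrow> (real \<Rightarrow> real \<Rightarrow> real) \<Rightarrow> bool" where
  "entropy_solution \<phi> g u0 u \<longleftrightarrow>
     Linf_Pi u \<and>
     weak_dx_L2loc (\<lambda>t x. g (u t x)) \<and>
     (\<forall>k f. test_fun f \<and> (\<forall>t x. f t x \<ge> 0) \<longrightarrow>
        (LINT z:Pi_dom|lebesgue.
            (let t = fst z; x = snd z in
               \<bar>u t x - k\<bar> * pt f t x
               + sgn (u t x - k) * (\<phi> (u t x) - \<phi> k) * px f t x
               + \<bar>g (u t x) - g k\<bar> * px (px f) t x)) \<ge> 0) \<and>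
     (\<exists>N. N \<in> null_sets lborel \<and>
        (\<forall>a b. ((\<lambda>t. LINT x:{a..b}|lebesgue. \<bar>u t x - u0 x\<bar>) \<longlongrightarrow> 0)
                 (at 0 within ({0<..} - N))))"

definition lebesgue_point :: "(real \<Rightarrow> real) \<Rightarrow> real \<Rightarrow> bool" where
  "lebesgue_point I t0 \<longleftrightarrow>
     (\<forall>\<^sub>F h in at_right 0. set_integrable lebesgue {t0 - h..t0 + h} I) \<and>
     ((\<lambda>h. (1 / (2 * h)) * (LINT s:{t0 - h..t0 + h}|lebesgue. \<bar>I s - I t0\<bar>)) \<longlongrightarrow> 0) (at_right 0)"

text \<open>E: common Lebesgue points in (0,inf) of t \<mapsto> \<integral>_T p(u(t,x)) f(x) dx,
  p \<in> C([-M,M]), f \<in> L^1(T); the torus T is represented by the period [0,1].\<close>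
definition common_lebesgue_points :: "(real \<Rightarrow> real \<Rightarrow> real) \<Rightarrow> real \<Rightarrow> real set" where
  "common_lebesgue_points u M =
     {t0. t0 > 0 \<and>
        (\<forall>p f. continuous_on {-M..M} p \<and> set_integrable lebesgue {0..1} f \<longrightarrow>
           lebesgue_point (\<lambda>t. LINT x:{0..1}|lebesgue. p (u t x) * f x) t0)}"

end

theory Submission
  imports Defs "HOL-Computational_Algebra.Polynomial"
begin

coinductive smooth :: "(real \<Rightarrow> real) \<Rightarrow> bool" where
  smoothI: "(\<And>x. (F has_real_derivative F' x) (at x)) \<Longrightarrow> smooth F' \<Longrightarrow> smooth F"

lemma smooth_deriv:
  assumes "smooth F"
  shows "(F has_real_derivative deriv F x) (at x)" "smooth (deriv F)"
proof -
  from assms obtain F' where d: "\<And>x. (F has_real_derivative F' x) (at x)" and s: "smooth F'"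
    by (cases rule: smooth.cases) blast
  have "deriv F = F'" using d by (intro ext DERIV_imp_deriv) auto
  then show "(F has_real_derivative deriv F x) (at x)" "smooth (deriv F)" using d s by auto
qed

lemma smooth_derivs:
  assumes "smooth F"
  shows "smooth ((deriv ^^ n) F)" "((deriv ^^ n) F has_real_derivative (deriv ^^ Suc n) F x) (at x)"
proof -
  show s: "smooth ((deriv ^^ n) F)" for n by (induction n) (auto simp: assms smooth_deriv)
  show "((deriv ^^ n) F has_real_derivative (deriv ^^ Suc n) F x) (at x)"
    using smooth_deriv(1)[OF s[of n]] by simp
qed

lemma smooth_cont: "smooth F \<Longrightarrow> continuous_on S F"
  by (meson DERIV_isCont continuous_at_imp_continuous_on smooth_deriv(1))

lemma smooth_const: "smooth (\<lambda>x. c)"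
proof -
  have "\<exists>c. F = (\<lambda>x. c) \<Longrightarrow> smooth F" for F
  proof (coinduction arbitrary: F rule: smooth.coinduct)
    case smooth
    then obtain c where "F = (\<lambda>x. c)" by auto
    moreover have "\<And>x. ((\<lambda>x. c) has_real_derivative 0) (at x)" by simp
    ultimately show ?case by (intro exI[of _ F] exI[of _ "\<lambda>x. 0"]) (auto intro: exI[of _ 0])
  qed
  then show ?thesis by auto
qed

lemma smooth_affine:
  assumes "smooth F" shows "smooth (\<lambda>x. c * F (a * x + b))"
proof -
  have "\<exists>F c. smooth F \<and> H = (\<lambda>x. c * F (a * x + b)) \<Longrightarrow> smooth H" for H
  proof (coinduction arbitrary: H rule: smooth.coinduct)
    case smooth
    then obtain F c where F: "smooth F" and H: "H = (\<lambda>x. c * F (a * x + b))" by auto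
    have "((\<lambda>x. c * F (a * x + b)) has_real_derivative (c * a) * deriv F (a * x + b)) (at x)" for x
    proof -
      have l: "((\<lambda>x. a*x+b) has_real_derivative a) (at x)" by (auto intro!: derivative_eq_intros)
      have "((\<lambda>x. F (a*x+b)) has_real_derivative deriv F (a * x + b) * a) (at x)"
        using DERIV_chain2[where f=F and g="\<lambda>x. a*x+b", OF smooth_deriv(1)[OF F] l] .
      from DERIV_cmult[OF this, of c] show ?thesis by (simp add: ac_simps)
    qed
    then show ?case using H F smooth_deriv(2)[OF F]
      by (intro exI[of _ H] exI[of _ "\<lambda>x. (c * a) * deriv F (a * x + b)"]) blast
  qed
  then show ?thesis using assms by blast
qed

definition sop :: "((real \<Rightarrow> real) \<times> (real \<Rightarrow> real)) list \<Rightarrow> real \<Rightarrow> real" where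
  "sop xs x = (\<Sum>p\<leftarrow>xs. fst p x * snd p x)"

definition sop_d :: "((real \<Rightarrow> real) \<times> (real \<Rightarrow> real)) list \<Rightarrow> ((real \<Rightarrow> real) \<times> (real \<Rightarrow> real)) list" where
  "sop_d xs = concat (map (\<lambda>p. [(deriv (fst p), snd p), (fst p, deriv (snd p))]) xs)"

lemma sop_deriv:
  assumes "\<forall>p\<in>set xs. smooth (fst p) \<and> smooth (snd p)"
  shows "(sop xs has_real_derivative sop (sop_d xs) x) (at x)"
  using assms
proof (induction xs)
  case Nil then show ?case by (simp add: sop_def sop_d_def)
next
  case (Cons p xs)
  have 1: "((\<lambda>x. fst p x * snd p x) has_real_derivative
      deriv (fst p) x * snd p x + fst p x * deriv (snd p) x) (at x)"
    using Cons.prems by (auto intro!: derivative_eq_intros smooth_deriv)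
  have e: "sop (p # xs) = (\<lambda>x. fst p x * snd p x + sop xs x)" by (auto simp: sop_def)
  have e2: "sop (sop_d (p # xs)) x = deriv (fst p) x * snd p x + fst p x * deriv (snd p) x + sop (sop_d xs) x"
    by (simp add: sop_def sop_d_def)
  show ?case unfolding e e2 using DERIV_add[OF 1 Cons.IH] Cons.prems by auto
qed

lemma sop_smooth:
  assumes "\<forall>p\<in>set xs. smooth (fst p) \<and> smooth (snd p)"
  shows "smooth (sop xs)"
proof -
  have "\<exists>xs. (\<forall>p\<in>set xs. smooth (fst p) \<and> smooth (snd p)) \<and> H = sop xs \<Longrightarrow> smooth H" for H
  proof (coinduction arbitrary: H rule: smooth.coinduct)
    case smooth
    then obtain xs where xs: "\<forall>p\<in>set xs. smooth (fst p) \<and> smooth (snd p)" and H: "H = sop xs" by auto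
    have "\<forall>p\<in>set (sop_d xs). smooth (fst p) \<and> smooth (snd p)"
      using xs by (auto simp: sop_d_def smooth_deriv)
    then show ?case using sop_deriv[OF xs] H by blast
  qed
  then show ?thesis using assms by blast
qed

lemma sop1: "sop [(F,G)] = (\<lambda>x. F x * G x)" by (simp add: sop_def fun_eq_iff)
lemma sop2: "sop [(F,\<lambda>x. 1),(G,\<lambda>x. 1)] = (\<lambda>x. F x + G x)" by (simp add: sop_def fun_eq_iff)

lemma smooth_mult: "smooth F \<Longrightarrow> smooth G \<Longrightarrow> smooth (\<lambda>x. F x * G x)"
  using sop_smooth[of "[(F,G)]"] by (simp add: sop1)

lemma smooth_add: "smooth F \<Longrightarrow> smooth G \<Longrightarrow> smooth (\<lambda>x. F x + G x)"
  using sop_smooth[of "[(F,\<lambda>x. 1),(G,\<lambda>x. 1)]"] smooth_const by (simp add: sop2)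

lemma poly_exp_lim: "((\<lambda>y. poly p y * exp (- y)) \<longlongrightarrow> (0::real)) at_top"
proof -
  have "((\<lambda>y. \<Sum>i\<le>degree p. coeff p i * (y ^ i / exp y)) \<longlongrightarrow> (\<Sum>i\<le>degree p. coeff p i * 0)) at_top"
    by (intro tendsto_sum tendsto_mult tendsto_const tendsto_power_div_exp_0)
  moreover have "(\<Sum>i\<le>degree p. coeff p i * (y ^ i / exp y)) = poly p y * exp (- y)" for y
    by (simp add: poly_altdef sum_distrib_right exp_minus divide_inverse mult.assoc)
  ultimately show ?thesis by simp
qed

lemma poly_exp_lim0: "((\<lambda>x. poly p (1/x) * exp (- (1/x)) / x) \<longlongrightarrow> (0::real)) (at_right 0)"
proof -
  have "((\<lambda>y. poly (p * [:0,1:]) y * exp (- y)) \<longlongrightarrow> (0::real)) at_top" by (rule poly_exp_lim)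
  from filterlim_compose[OF this filterlim_inverse_at_top_right]
  have "((\<lambda>x. poly (p * [:0,1:]) (inverse x) * exp (- inverse x)) \<longlongrightarrow> (0::real)) (at_right 0)" .
  then show ?thesis by (simp add: divide_inverse ac_simps)
qed

definition flatf :: "real poly \<Rightarrow> real \<Rightarrow> real" where
  "flatf p x = (if x > 0 then poly p (1/x) * exp (- (1/x)) else 0)"

lemma flatf_deriv: "(flatf p has_real_derivative flatf ([:0,0,1:] * (p - pderiv p)) x) (at x)"
proof -
  consider "x > 0" | "x < 0" | "x = 0" by linarith
  then show ?thesis
  proof cases
    case 1
    have "((\<lambda>x. poly p (1/x) * exp (- (1/x))) has_real_derivative
         poly (pderiv p) (1/x) * (- 1 / x^2) * exp (- (1/x)) + poly p (1/x) * (exp (- (1/x)) * (1/x^2))) (at x)"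
      using 1 by (auto intro!: derivative_eq_intros DERIV_chain2[where f="poly p", OF poly_DERIV]
          simp: power2_eq_square)
    moreover have "poly (pderiv p) (1/x) * (- 1 / x^2) * exp (- (1/x)) + poly p (1/x) * (exp (- (1/x)) * (1/x^2))
       = flatf ([:0,0,1:] * (p - pderiv p)) x"
      using 1 by (simp add: flatf_def algebra_simps power2_eq_square divide_inverse)
    ultimately have "((\<lambda>x. poly p (1/x) * exp (- (1/x))) has_real_derivative flatf ([:0,0,1:] * (p - pderiv p)) x) (at x)"
      by simp
    then show ?thesis
      by (rule has_field_derivative_transform_within_open[where S="{0<..}"], use 1 in \<open>auto simp: flatf_def\<close>)
  next
    case 2
    have "((\<lambda>x. 0) has_real_derivative flatf ([:0,0,1:] * (p - pderiv p)) x) (at x)" using 2 by (simp add: flatf_def)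
    then show ?thesis
      by (rule has_field_derivative_transform_within_open[where S="{..<0}"], use 2 in \<open>auto simp: flatf_def\<close>)
  next
    case 3
    have "((\<lambda>y. (flatf p y - flatf p 0) / (y - 0)) \<longlongrightarrow> 0) (at 0)"
    proof (rule filterlim_split_at_real)
      show "((\<lambda>y. (flatf p y - flatf p 0) / (y - 0)) \<longlongrightarrow> 0) (at_left 0)"
        by (rule tendsto_eventually, rule eventually_mono[OF eventually_at_left_real[of "-1" 0]]) (auto simp: flatf_def)
      show "((\<lambda>y. (flatf p y - flatf p 0) / (y - 0)) \<longlongrightarrow> 0) (at_right 0)"
      proof (rule Lim_transform_eventually[OF poly_exp_lim0[of p]])
        show "\<forall>\<^sub>F x in at_right 0. poly p (1 / x) * exp (- (1 / x)) / x = (flatf p x - flatf p 0) / (x - 0)"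
          by (rule eventually_mono[OF eventually_at_right_real[of 0 1]]) (auto simp: flatf_def)
      qed
    qed
    then show ?thesis using 3 by (simp add: has_field_derivative_iff flatf_def)
  qed
qed

lemma flatf_smooth: "smooth (flatf p)"
proof -
  have "\<exists>p. H = flatf p \<Longrightarrow> smooth H" for H
  proof (coinduction arbitrary: H rule: smooth.coinduct)
    case smooth
    then obtain p where "H = flatf p" by auto
    then show ?case using flatf_deriv[of p]
      by (intro exI[of _ H] exI[of _ "flatf ([:0,0,1:] * (p - pderiv p))"]) blast
  qed
  then show ?thesis by blast
qed

definition bump :: "real \<Rightarrow> real" where
  "bump x = flatf [:1:] (1 + x) * flatf [:1:] (1 - x)"

lemma bump_smooth: "smooth bump"
proof -
  have "smooth (\<lambda>x. 1 * flatf [:1:] (1 * x + 1))" "smooth (\<lambda>x. 1 * flatf [:1:] ((-1) * x + 1))"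
    by (intro smooth_affine flatf_smooth)+
  then have "smooth (\<lambda>x. flatf [:1:] (1 + x) * flatf [:1:] (1 - x))"
    using smooth_mult by (simp add: ac_simps)
  then show ?thesis unfolding bump_def[abs_def] .
qed

lemma bump_nonneg: "0 \<le> bump x" by (simp add: bump_def flatf_def)
lemma bump_le1: "bump x \<le> 1"
  by (auto simp: bump_def flatf_def mult_le_one)
lemma bump_zero: "x \<le> -1 \<or> x \<ge> 1 \<Longrightarrow> bump x = 0"
  by (auto simp: bump_def flatf_def)
lemma bump_cont: "continuous_on S bump" by (rule smooth_cont[OF bump_smooth])

lemma bump_lower: "\<bar>x\<bar> \<le> 1/2 \<Longrightarrow> exp (-4) \<le> bump x"
proof -
  assume x: "\<bar>x\<bar> \<le> 1/2"
  have a: "exp (-2) \<le> exp (- (1 / (1 + x)))" using x by (auto simp: field_simps)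
  have b: "exp (-2) \<le> exp (- (1 / (1 - x)))" using x by (auto simp: field_simps)
  have "exp (-2) * exp (-2) \<le> exp (- (1 / (1 + x))) * exp (- (1 / (1 - x)))"
    by (intro mult_mono a b) auto
  moreover have "exp (-2) * exp (-2) = exp (-4::real)" by (simp add: exp_add[symmetric])
  moreover have "0 < 1 + x" "x < 1" using x by auto
  ultimately show ?thesis using x by (simp add: bump_def flatf_def)
qed

definition c0 :: real where "c0 = integral {-3..1} bump"

lemma bump_integrable: "bump integrable_on {a..b}"
  by (intro integrable_continuous_interval bump_cont)

lemma c0_pos: "c0 > 0"
proof -
  have "exp (-4) \<le> integral {-1/2..1/2} bump"
  proof -
    have "integral {-1/2..1/2::real} (\<lambda>x. exp (-4)) \<le> integral {-1/2..1/2} bump"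
      by (intro integral_le bump_integrable) (auto intro: bump_lower)
    then show ?thesis by simp
  qed
  also have "\<dots> \<le> c0" unfolding c0_def
    by (intro integral_subset_le bump_integrable) (auto simp: bump_nonneg)
  finally show ?thesis by (smt (verit) exp_gt_zero)
qed

definition rho :: "real \<Rightarrow> real" where "rho x = integral {-3..x} bump / c0"

lemma rho_zero: "x \<le> -1 \<Longrightarrow> rho x = 0"
proof -
  assume x: "x \<le> -1"
  have "integral {-3..x} bump = integral {-3..x} (\<lambda>_. 0::real)"
    by (intro integral_cong) (use x in \<open>auto intro: bump_zero\<close>)
  then show ?thesis by (simp add: rho_def)
qed

lemma rho_one: "x \<ge> 1 \<Longrightarrow> rho x = 1"
proof -
  assume x: "x \<ge> 1"
  have "integral {-3..1} bump + integral {1..x} bump = integral {-3..x} bump"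
    using x by (intro Henstock_Kurzweil_Integration.integral_combine[OF _ _ bump_integrable]) auto
  moreover have "integral {1..x} bump = integral {1..x} (\<lambda>_. 0::real)"
    by (intro integral_cong) (auto intro: bump_zero)
  ultimately show ?thesis using c0_pos by (simp add: rho_def c0_def)
qed

lemma rho_deriv: "(rho has_real_derivative bump x / c0) (at x)"
proof (cases "x < -2")
  case True
  have "((\<lambda>_. 0) has_real_derivative bump x / c0) (at x)" using True by (simp add: bump_zero)
  then show ?thesis
    by (rule has_field_derivative_transform_within_open[where S="{..<-1}"]) (use True in \<open>auto simp: rho_zero\<close>)
next
  case False
  have "((\<lambda>y. integral {-3..y} bump) has_real_derivative bump x) (at x within {-3..x+1})"
    using False by (intro integral_has_real_derivative bump_cont) auto
  then have "((\<lambda>y. integral {-3..y} bump) has_real_derivative bump x) (at x)"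
    using False by (subst (asm) at_within_interior) (auto simp: interior_atLeastAtMost_real)
  then show ?thesis unfolding rho_def[abs_def] by (intro DERIV_cdivide)
qed

lemma deriv_rho: "deriv rho = (\<lambda>x. bump x / c0)"
  using rho_deriv by (intro ext DERIV_imp_deriv)

lemma rho_smooth: "smooth rho"
proof (rule smoothI[OF rho_deriv])
  show "smooth (\<lambda>x. bump x / c0)"
    using smooth_affine[OF bump_smooth, of "1/c0" 1 0] by simp
qed

lemma rho_mono: "x \<le> y \<Longrightarrow> rho x \<le> rho y"
  by (rule DERIV_nonneg_imp_nondecreasing[of x y rho])
    (use rho_deriv c0_pos bump_nonneg in \<open>auto intro!: exI\<close>)

lemma rho_bounds: "0 \<le> rho x" "rho x \<le> 1"
  using rho_mono[of "-1" x] rho_mono[of x 1] rho_zero[of "-1"] rho_one[of 1]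
  by (cases "x \<le> -1"; cases "x \<le> 1"; auto simp: rho_zero rho_one)+

lemma smooth_zero_outside_deriv:
  assumes "smooth F" "\<And>x. x \<notin> {a..b} \<Longrightarrow> F x = 0" "x \<notin> {a..b}"
  shows "deriv F x = 0"
proof -
  have "((\<lambda>_. 0) has_real_derivative 0) (at x)" by simp
  then have "(F has_real_derivative 0) (at x)"
  proof (rule has_field_derivative_transform_within_open[where S="- {a..b}"])
    show "open (- {a..b::real})" by auto
  qed (use assms in auto)
  then show ?thesis by (rule DERIV_imp_deriv)
qed

lemma smooth_zero_outside_derivs:
  assumes "smooth F" "\<And>x. x \<notin> {a..b} \<Longrightarrow> F x = 0" "x \<notin> {a..b}"
  shows "(deriv ^^ n) F x = 0"
  using assms(3)
proof (induction n arbitrary: x)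
  case 0 then show ?case using assms by simp
next
  case (Suc n)
  show ?case using smooth_zero_outside_deriv[OF smooth_derivs(1)[OF assms(1), of n] Suc.IH Suc.prems] by simp
qed

lemma bounded_cs:
  fixes F :: "real \<Rightarrow> real" and a b :: real
  assumes "continuous_on UNIV F" "\<And>x. x \<notin> {a..b} \<Longrightarrow> F x = (0::real)"
  shows "\<exists>B. \<forall>x. \<bar>F x\<bar> \<le> B"
proof -
  have "compact (F ` {a..b})" by (intro compact_continuous_image continuous_on_subset[OF assms(1)]) (auto simp: compact_Icc)
  then obtain B where B: "\<And>y. y \<in> F ` {a..b} \<Longrightarrow> norm y \<le> B"
    by (meson bounded_iff compact_imp_bounded)
  show ?thesis
  proof (intro exI allI)
    fix x show "\<bar>F x\<bar> \<le> max B 0" using B[of "F x"] assms(2)[of x] by (cases "x \<in> {a..b}") auto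
  qed
qed

lemma test_fun_prod:
  assumes "smooth \<kappa>" "smooth \<psi>" "0 < a"
    "\<And>s. s \<notin> {a..b} \<Longrightarrow> \<kappa> s = 0" "\<And>x. x \<notin> {c..d} \<Longrightarrow> \<psi> x = 0"
  shows "test_fun (\<lambda>s x. \<kappa> s * \<psi> x)"
  unfolding test_fun_def
proof (intro conjI)
  let ?D = "\<lambda>i j s x. (deriv ^^ i) \<kappa> s * (deriv ^^ j) \<psi> x"
  show "\<exists>D. D 0 0 = (\<lambda>s x. \<kappa> s * \<psi> x) \<and>
      (\<forall>i j t x. ((\<lambda>s. D i j s x) has_real_derivative D (Suc i) j t x) (at t) \<and>
                 ((\<lambda>y. D i j t y) has_real_derivative D i (Suc j) t x) (at x)) \<and>
      (\<forall>i j. continuous_on UNIV (\<lambda>z. D i j (fst z) (snd z)))"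
  proof (intro exI[of _ ?D] conjI allI)
    show "?D 0 0 = (\<lambda>s x. \<kappa> s * \<psi> x)" by simp
    fix i j t x
    show "((\<lambda>s. ?D i j s x) has_real_derivative ?D (Suc i) j t x) (at t)"
      using DERIV_cmult_right[OF smooth_derivs(2)[OF assms(1)]] by simp
    show "((\<lambda>y. ?D i j t y) has_real_derivative ?D i (Suc j) t x) (at x)"
      using DERIV_cmult[OF smooth_derivs(2)[OF assms(2)]] by simp
  next
    fix i j
    have c1: "continuous_on UNIV ((deriv ^^ i) \<kappa>)" "continuous_on UNIV ((deriv ^^ j) \<psi>)"
      by (intro smooth_cont smooth_derivs assms)+
    show "continuous_on UNIV (\<lambda>z. ?D i j (fst z) (snd z))"
      by (intro continuous_intros continuous_on_compose2[OF c1(1)] continuous_on_compose2[OF c1(2)]) auto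
  qed
  show "\<exists>K. compact K \<and> K \<subseteq> Pi_dom \<and> (\<forall>t x. (t, x) \<notin> K \<longrightarrow> \<kappa> t * \<psi> x = 0)"
    using assms by (intro exI[of _ "{a..b} \<times> {c..d}"]) (auto simp: compact_Times Pi_dom_def)
qed

lemma pt_prod: "smooth \<kappa> \<Longrightarrow> pt (\<lambda>s x. \<kappa> s * \<psi> x) s x = deriv \<kappa> s * \<psi> x"
  unfolding pt_def by (intro DERIV_imp_deriv DERIV_cmult_right smooth_deriv)

lemma px_prod: "smooth \<psi> \<Longrightarrow> px (\<lambda>s x. \<kappa> s * \<psi> x) = (\<lambda>s x. \<kappa> s * deriv \<psi> x)"
  unfolding px_def by (intro ext DERIV_imp_deriv DERIV_cmult smooth_deriv)

lemma pxx_prod: "smooth \<psi> \<Longrightarrow> px (px (\<lambda>s x. \<kappa> s * \<psi> x)) s x = \<kappa> s * deriv (deriv \<psi>) x"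
  by (simp add: px_prod smooth_deriv(2))

lemma integrable_bdd_cbox:
  fixes f :: "'a::euclidean_space \<Rightarrow> real"
  assumes "f \<in> borel_measurable lborel" "\<And>z. \<bar>f z\<bar> \<le> K * indicator (cbox l h) z"
  shows "integrable lborel f"
proof -
  have i: "integrable lborel (\<lambda>z. K * indicator (cbox l h) z)"
    by (intro integrable_mult_right integrable_real_indicator emeasure_lborel_cbox_finite) auto
  have "AE z in lborel. norm (f z) \<le> norm (K * indicator (cbox l h) z)"
    using assms(2) by (auto intro!: AE_I2 order_trans[OF _ abs_ge_self])
  from Bochner_Integration.integrable_bound[OF i assms(1) this] show ?thesis .
qed

locale ent_ctx =
  fixes \<phi> g u0 :: "real \<Rightarrow> real" and u :: "real \<Rightarrow> real \<Rightarrow> real" and M :: real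
  assumes cphi: "continuous_on UNIV \<phi>" and cg: "continuous_on UNIV g"
    and ent: "entropy_solution \<phi> g u0 u" and bnd: "\<forall>t x. t > 0 \<longrightarrow> \<bar>u t x\<bar> \<le> M"
begin

lemma M_nonneg: "0 \<le> M"
  using bnd by (metis abs_ge_zero order_trans zero_less_one)

lemma bnd': "t > 0 \<Longrightarrow> \<bar>u t x\<bar> \<le> M" using bnd by auto

lemma w_exists: "\<exists>w. w \<in> borel_measurable lborel \<and> (\<forall>z. \<bar>w z\<bar> \<le> M) \<and>
   (AE z in lborel. z \<in> Pi_dom \<longrightarrow> w z = u (fst z) (snd z))"
proof -
  have "(\<lambda>z. indicator Pi_dom z *\<^sub>R u (fst z) (snd z)) \<in> borel_measurable lebesgue"
    using ent unfolding entropy_solution_def Linf_Pi_def set_borel_measurable_def by auto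
  from completion_ex_borel_measurable_real[OF this] obtain h where
    h: "h \<in> borel_measurable lborel" "AE z in lborel. indicator Pi_dom z *\<^sub>R u (fst z) (snd z) = h z"
    by auto
  define w where "w z = max (-M) (min M (h z))" for z
  have "w \<in> borel_measurable lborel" unfolding w_def using h(1) by measurable
  moreover have "\<forall>z. \<bar>w z\<bar> \<le> M" using M_nonneg by (auto simp: w_def)
  moreover have "AE z in lborel. z \<in> Pi_dom \<longrightarrow> w z = u (fst z) (snd z)"
    using h(2)
  proof (rule eventually_mono)
    fix z assume "indicator Pi_dom z *\<^sub>R u (fst z) (snd z) = h z"
    then show "z \<in> Pi_dom \<longrightarrow> w z = u (fst z) (snd z)"
      using bnd'[of "fst z" "snd z"] by (auto simp: w_def Pi_dom_def)
  qed
  ultimately show ?thesis by blast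
qed

definition wb :: "real \<times> real \<Rightarrow> real" where
  "wb = (SOME w. w \<in> borel_measurable lborel \<and> (\<forall>z. \<bar>w z\<bar> \<le> M) \<and>
   (AE z in lborel. z \<in> Pi_dom \<longrightarrow> w z = u (fst z) (snd z)))"

lemma wb: "wb \<in> borel_measurable lborel" "\<And>z. \<bar>wb z\<bar> \<le> M"
   "AE z in lborel. z \<in> Pi_dom \<longrightarrow> wb z = u (fst z) (snd z)"
  using someI_ex[OF w_exists] unfolding wb_def[symmetric] by auto

lemma wb_meas[measurable]: "wb \<in> borel_measurable borel"
  using wb(1) by (simp add: measurable_lborel1)

lemma wb_pair_meas: "wb \<in> borel_measurable (lborel \<Otimes>\<^sub>M lborel)"
  using wb(1) by (simp add: lborel_prod)

lemma wb_section_meas[measurable]: "(\<lambda>x. wb (s, x)) \<in> borel_measurable borel"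
  using measurable_Pair2[OF wb_pair_meas, of s] by (simp add: measurable_lborel1)

lemma wb_sections: "AE s in lborel. s > 0 \<longrightarrow> (AE x in lborel. wb (s, x) = u s x)"
proof -
  have "AE z in lborel \<Otimes>\<^sub>M lborel. z \<in> Pi_dom \<longrightarrow> wb z = u (fst z) (snd z)"
    using wb(3) unfolding lborel_prod .
  from lborel_pair.AE_pair[OF this]
  show ?thesis by (rule eventually_mono) (auto simp: Pi_dom_def)
qed

lemma cont_bdd: "continuous_on UNIV F \<Longrightarrow> \<exists>B. \<forall>v::real. \<bar>v\<bar> \<le> M \<longrightarrow> \<bar>F v :: real\<bar> \<le> B"
proof -
  assume c: "continuous_on UNIV F"
  have "compact (F ` {-M..M})" by (intro compact_continuous_image continuous_on_subset[OF c]) (auto simp: compact_Icc)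
  then obtain B where B: "\<And>y. y \<in> F ` {-M..M} \<Longrightarrow> norm y \<le> B"
    by (meson bounded_iff compact_imp_bounded)
  show ?thesis
  proof (intro exI[of _ B] allI impI)
    fix v :: real assume "\<bar>v\<bar> \<le> M"
    then have "v \<in> {-M..M}" by (auto simp: abs_le_iff)
    then have "F v \<in> F ` {-M..M}" by (rule imageI)
    from B[OF this] show "\<bar>F v\<bar> \<le> B" by simp
  qed
qed

lemma Cb_exists:
  assumes "smooth \<psi>" "\<And>x. x \<notin> {c..d} \<Longrightarrow> \<psi> x = 0"
  shows "\<exists>Cb\<ge>0. \<forall>v x. \<bar>v\<bar> \<le> M \<longrightarrow>
     \<bar>sgn (v - k) * (\<phi> v - \<phi> k) * deriv \<psi> x + \<bar>g v - g k\<bar> * deriv (deriv \<psi>) x\<bar> \<le> Cb * indicator {c..d} x"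
proof -
  obtain Bp where Bp: "\<And>v. \<bar>v\<bar> \<le> M \<Longrightarrow> \<bar>\<phi> v\<bar> \<le> Bp" using cont_bdd[OF cphi] by auto
  obtain Bg where Bg: "\<And>v. \<bar>v\<bar> \<le> M \<Longrightarrow> \<bar>g v\<bar> \<le> Bg" using cont_bdd[OF cg] by auto
  have z1: "x \<notin> {c..d} \<Longrightarrow> deriv \<psi> x = 0" for x
    using smooth_zero_outside_deriv[OF assms] by blast
  have z2: "x \<notin> {c..d} \<Longrightarrow> deriv (deriv \<psi>) x = 0" for x
    using smooth_zero_outside_deriv[OF smooth_deriv(2)[OF assms(1)] z1] by blast
  obtain B1 where B1: "\<And>x. \<bar>deriv \<psi> x\<bar> \<le> B1"
    using bounded_cs[of "deriv \<psi>" c d] z1 smooth_cont smooth_deriv(2)[OF assms(1)] by blast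
  obtain B2 where B2: "\<And>x. \<bar>deriv (deriv \<psi>) x\<bar> \<le> B2"
    using bounded_cs[of "deriv (deriv \<psi>)" c d] z2 smooth_cont smooth_deriv(2)[OF smooth_deriv(2)[OF assms(1)]] by blast
  define Cb where "Cb = (Bp + \<bar>\<phi> k\<bar>) * B1 + (Bg + \<bar>g k\<bar>) * B2"
  have B1p: "0 \<le> B1" using B1[of 0] by linarith
  have B2p: "0 \<le> B2" using B2[of 0] by linarith
  show ?thesis
  proof (intro exI[of _ "max Cb 0"] conjI allI impI)
    fix v x assume v: "\<bar>v\<bar> \<le> M"
    show "\<bar>sgn (v - k) * (\<phi> v - \<phi> k) * deriv \<psi> x + \<bar>g v - g k\<bar> * deriv (deriv \<psi>) x\<bar> \<le> max Cb 0 * indicator {c..d} x"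
    proof (cases "x \<in> {c..d}")
      case False then show ?thesis using z1 z2 by simp
    next
      case True
      have "\<bar>sgn (v - k) * (\<phi> v - \<phi> k) * deriv \<psi> x\<bar> \<le> (Bp + \<bar>\<phi> k\<bar>) * B1"
      proof -
        have "\<bar>sgn (v - k) * (\<phi> v - \<phi> k) * deriv \<psi> x\<bar> \<le> 1 * \<bar>\<phi> v - \<phi> k\<bar> * \<bar>deriv \<psi> x\<bar>"
        proof -
          have "\<bar>sgn (v - k)\<bar> \<le> 1" by (simp add: sgn_real_def)
          then show ?thesis unfolding abs_mult by (intro mult_right_mono) auto
        qed
        also have "\<dots> \<le> (Bp + \<bar>\<phi> k\<bar>) * B1"
          using Bp[OF v] B1[of x] by (intro mult_mono) auto
        finally show ?thesis .
      qed
      moreover have "\<bar>\<bar>g v - g k\<bar> * deriv (deriv \<psi>) x\<bar> \<le> (Bg + \<bar>g k\<bar>) * B2"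
        using Bg[OF v] B2[of x] by (auto simp: abs_mult intro!: mult_mono)
      ultimately show ?thesis using True by (auto simp: Cb_def)
    qed
  qed auto
qed

definition At :: "real \<Rightarrow> (real \<Rightarrow> real) \<Rightarrow> real \<Rightarrow> real" where
  "At k \<psi> s = (\<integral>x. \<bar>wb (s, x) - k\<bar> * \<psi> x \<partial>lborel)"

lemma key0:
  assumes sk: "smooth \<kappa>" and k0: "\<And>s. 0 \<le> \<kappa> s" and k1: "\<And>s. \<kappa> s \<le> 1"
    and a: "0 < a" "a \<le> b" and kz: "\<And>s. s \<notin> {a..b} \<Longrightarrow> \<kappa> s = 0"
    and sp: "smooth \<psi>" and p0: "\<And>x. 0 \<le> \<psi> x" and cd: "c \<le> d"
    and pz: "\<And>x. x \<notin> {c..d} \<Longrightarrow> \<psi> x = 0"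
    and Cb: "0 \<le> Cb" "\<And>v x. \<bar>v\<bar> \<le> M \<Longrightarrow>
     \<bar>sgn (v - k) * (\<phi> v - \<phi> k) * deriv \<psi> x + \<bar>g v - g k\<bar> * deriv (deriv \<psi>) x\<bar> \<le> Cb * indicator {c..d} x"
  shows "0 \<le> (\<integral>s. deriv \<kappa> s * At k \<psi> s \<partial>lborel) + Cb * (b - a) * (d - c)"
proof -
  let ?f = "\<lambda>s x. \<kappa> s * \<psi> x"
  have tf: "test_fun ?f" by (rule test_fun_prod[OF sk sp a(1) kz pz])
  have nn: "\<forall>t x. 0 \<le> ?f t x" using k0 p0 by auto
  define \<Phi> where "\<Phi> z v = \<bar>v - k\<bar> * (deriv \<kappa> (fst z) * \<psi> (snd z))
      + sgn (v - k) * (\<phi> v - \<phi> k) * (\<kappa> (fst z) * deriv \<psi> (snd z))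
      + \<bar>g v - g k\<bar> * (\<kappa> (fst z) * deriv (deriv \<psi>) (snd z))" for z :: "real \<times> real" and v
  have E0: "0 \<le> (LINT z:Pi_dom|lebesgue.
            (let t = fst z; x = snd z in
               \<bar>u t x - k\<bar> * pt ?f t x
               + sgn (u t x - k) * (\<phi> (u t x) - \<phi> k) * px ?f t x
               + \<bar>g (u t x) - g k\<bar> * px (px ?f) t x))"
    using ent tf nn unfolding entropy_solution_def by blast
  have E1: "(let t = fst z; x = snd z in
               \<bar>u t x - k\<bar> * pt ?f t x
               + sgn (u t x - k) * (\<phi> (u t x) - \<phi> k) * px ?f t x
               + \<bar>g (u t x) - g k\<bar> * px (px ?f) t x) = \<Phi> z (u (fst z) (snd z))" for z
    by (simp add: Let_def \<Phi>_def pt_prod[OF sk] px_prod[OF sp] px_prod[OF smooth_deriv(2)[OF sp]])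
  have E2: "0 \<le> integral\<^sup>L lebesgue (\<lambda>z. indicator Pi_dom z *\<^sub>R \<Phi> z (u (fst z) (snd z)))"
    using E0 unfolding E1 set_lebesgue_integral_def .
  have dk0: "s \<notin> {a..b} \<Longrightarrow> deriv \<kappa> s = 0" for s using smooth_zero_outside_deriv[OF sk kz] by blast
  have [measurable]: "deriv \<kappa> \<in> borel_measurable borel" "\<kappa> \<in> borel_measurable borel"
    "\<psi> \<in> borel_measurable borel" "deriv \<psi> \<in> borel_measurable borel"
    "deriv (deriv \<psi>) \<in> borel_measurable borel" "\<phi> \<in> borel_measurable borel" "g \<in> borel_measurable borel"
    by (intro borel_measurable_continuous_onI smooth_cont smooth_deriv sk sp cphi cg)+
  have [measurable]: "wb \<in> borel_measurable (borel \<Otimes>\<^sub>M borel)" using wb_meas by (simp add: borel_prod)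
  have "(\<lambda>z. \<Phi> z (wb z)) \<in> borel_measurable (borel \<Otimes>\<^sub>M borel)"
    unfolding \<Phi>_def by measurable
  then have Phim: "(\<lambda>z. \<Phi> z (wb z)) \<in> borel_measurable borel" by (simp add: borel_prod)
  have AEq: "AE z in lborel. indicator Pi_dom z *\<^sub>R \<Phi> z (u (fst z) (snd z)) = \<Phi> z (wb z)"
    using wb(3)
  proof (rule eventually_mono)
    fix z :: "real \<times> real" assume h: "z \<in> Pi_dom \<longrightarrow> wb z = u (fst z) (snd z)"
    show "indicator Pi_dom z *\<^sub>R \<Phi> z (u (fst z) (snd z)) = \<Phi> z (wb z)"
    proof (cases "z \<in> Pi_dom")
      case True then show ?thesis using h by simp
    next
      case False
      then have "fst z \<notin> {a..b}" using a by (cases z) (auto simp: Pi_dom_def)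
      then show ?thesis using False kz dk0 by (simp add: \<Phi>_def)
    qed
  qed
  have E3: "integral\<^sup>L lebesgue (\<lambda>z. indicator Pi_dom z *\<^sub>R \<Phi> z (u (fst z) (snd z))) = integral\<^sup>L lborel (\<lambda>z. \<Phi> z (wb z))"
  proof -
    have m1: "(\<lambda>z. \<Phi> z (wb z)) \<in> borel_measurable lebesgue"
      using Phim by (intro measurable_completion) (simp add: measurable_lborel1)
    have ae: "AE z in lebesgue. \<Phi> z (wb z) = indicator Pi_dom z *\<^sub>R \<Phi> z (u (fst z) (snd z))"
      using AE_completion[OF AEq] by (rule eventually_mono) simp
    have m2: "(\<lambda>z. indicator Pi_dom z *\<^sub>R \<Phi> z (u (fst z) (snd z))) \<in> borel_measurable lebesgue"
      by (rule borel_measurable_AE[OF m1 ae])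
    have "integral\<^sup>L lebesgue (\<lambda>z. indicator Pi_dom z *\<^sub>R \<Phi> z (u (fst z) (snd z))) = integral\<^sup>L lebesgue (\<lambda>z. \<Phi> z (wb z))"
      by (intro integral_cong_AE m1 m2) (use ae in \<open>auto elim: eventually_mono\<close>)
    also have "\<dots> = integral\<^sup>L lborel (\<lambda>z. \<Phi> z (wb z))"
      using Phim by (intro integral_completion) (simp add: measurable_lborel1)
    finally show ?thesis .
  qed
  obtain Bk where Bk: "\<And>s. \<bar>deriv \<kappa> s\<bar> \<le> Bk"
    using bounded_cs[of "deriv \<kappa>" a b] dk0 smooth_cont smooth_deriv(2)[OF sk] by blast
  obtain Bp where Bp: "\<And>x. \<bar>\<psi> x\<bar> \<le> Bp"
    using bounded_cs[of \<psi> c d] pz smooth_cont[OF sp] by blast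
  define Q where "Q = cbox (a, c) (b, d)"
  have indQ: "indicator Q z = indicator {a..b} (fst z) * (indicator {c..d} (snd z) :: real)" for z
    unfolding Q_def cbox_Pair_eq by (simp add: indicator_times)
  define \<Psi>1 where "\<Psi>1 z = deriv \<kappa> (fst z) * (\<bar>wb z - k\<bar> * \<psi> (snd z))" for z
  define \<Psi>2 where "\<Psi>2 z = Cb * indicator Q z" for z :: "real \<times> real"
  have Psi1_bd: "\<bar>\<Psi>1 z\<bar> \<le> (Bk * ((M + \<bar>k\<bar>) * Bp)) * indicator Q z" for z
  proof (cases "z \<in> Q")
    case True
    have "\<bar>wb z - k\<bar> \<le> M + \<bar>k\<bar>" using wb(2)[of z] by linarith
    then have "\<bar>\<Psi>1 z\<bar> \<le> Bk * ((M + \<bar>k\<bar>) * Bp)" unfolding \<Psi>1_def abs_mult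
      using Bk Bp Bk[of 0] by (intro mult_mono) (auto intro: order_trans[OF abs_ge_zero])
    then show ?thesis using True by simp
  next
    case False
    then have "fst z \<notin> {a..b} \<or> snd z \<notin> {c..d}" unfolding Q_def cbox_Pair_eq by (cases z) auto
    then show ?thesis using False dk0 pz by (auto simp: \<Psi>1_def)
  qed
  have bound: "\<Phi> z (wb z) \<le> \<Psi>1 z + \<Psi>2 z" and Phi_bd: "\<bar>\<Phi> z (wb z)\<bar> \<le> (Bk * ((M + \<bar>k\<bar>) * Bp) + Cb) * indicator Q z" for z
  proof -
    let ?X = "sgn (wb z - k) * (\<phi> (wb z) - \<phi> k) * deriv \<psi> (snd z) + \<bar>g (wb z) - g k\<bar> * deriv (deriv \<psi>) (snd z)"
    have eq: "\<Phi> z (wb z) = \<Psi>1 z + \<kappa> (fst z) * ?X" unfolding \<Phi>_def \<Psi>1_def by (simp add: algebra_simps)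
    have X: "\<bar>?X\<bar> \<le> Cb * indicator {c..d} (snd z)" using Cb(2)[OF wb(2)[of z]] .
    have kk: "\<kappa> (fst z) \<le> indicator {a..b} (fst z)"
      using k1 kz[of "fst z"] by (cases "fst z \<in> {a..b}") auto
    have "\<bar>\<kappa> (fst z) * ?X\<bar> \<le> indicator {a..b} (fst z) * (Cb * indicator {c..d} (snd z))"
      unfolding abs_mult using k0[of "fst z"] X kk by (intro mult_mono) auto
    also have "\<dots> = \<Psi>2 z" by (simp add: \<Psi>2_def indQ)
    finally have X2: "\<bar>\<kappa> (fst z) * ?X\<bar> \<le> \<Psi>2 z" .
    then show "\<Phi> z (wb z) \<le> \<Psi>1 z + \<Psi>2 z" unfolding eq by linarith
    show "\<bar>\<Phi> z (wb z)\<bar> \<le> (Bk * ((M + \<bar>k\<bar>) * Bp) + Cb) * indicator Q z"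
      using X2 Psi1_bd[of z] unfolding eq \<Psi>2_def by (simp add: algebra_simps)
  qed
  have "\<Psi>1 \<in> borel_measurable (borel \<Otimes>\<^sub>M borel)" unfolding \<Psi>1_def by measurable
  then have m1: "\<Psi>1 \<in> borel_measurable lborel" by (simp add: borel_prod)
  have m2: "\<Psi>2 \<in> borel_measurable lborel" unfolding \<Psi>2_def Q_def measurable_lborel1 by measurable
  have i1: "integrable lborel \<Psi>1" unfolding Q_def
    by (rule integrable_bdd_cbox[OF m1]) (use Psi1_bd Q_def in auto)
  have i2: "integrable lborel \<Psi>2" unfolding \<Psi>2_def Q_def
    by (intro integrable_mult_right integrable_real_indicator emeasure_lborel_cbox_finite) auto
  have i0: "integrable lborel (\<lambda>z. \<Phi> z (wb z))"
    by (rule integrable_bdd_cbox[of _ _ "(a,c)" "(b,d)"]) (use Phim Phi_bd Q_def in \<open>auto simp: measurable_lborel1\<close>)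
  have "integral\<^sup>L lborel (\<lambda>z. \<Phi> z (wb z)) \<le> integral\<^sup>L lborel (\<lambda>z. \<Psi>1 z + \<Psi>2 z)"
    by (intro integral_mono i0 Bochner_Integration.integrable_add i1 i2 bound)
  also have "\<dots> = integral\<^sup>L lborel \<Psi>1 + integral\<^sup>L lborel \<Psi>2"
    by (intro Bochner_Integration.integral_add i1 i2)
  also have "integral\<^sup>L lborel \<Psi>2 = Cb * ((b - a) * (d - c))"
  proof -
    have "integral\<^sup>L lborel \<Psi>2 = Cb * measure lborel Q" by (simp add: \<Psi>2_def[abs_def])
    also have "measure lborel Q = (b - a) * (d - c)"
      unfolding Q_def content_Pair using a cd by simp
    finally show ?thesis .
  qed
  also have "integral\<^sup>L lborel \<Psi>1 = (\<integral>s. deriv \<kappa> s * At k \<psi> s \<partial>lborel)"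
  proof -
    have "integrable (lborel \<Otimes>\<^sub>M lborel) \<Psi>1" using i1 unfolding lborel_prod .
    from lborel_pair.integral_fst'[OF this]
    have "(\<integral>s. (\<integral>x. \<Psi>1 (s, x) \<partial>lborel) \<partial>lborel) = integral\<^sup>L (lborel \<Otimes>\<^sub>M lborel) \<Psi>1" .
    then have "integral\<^sup>L lborel \<Psi>1 = (\<integral>s. (\<integral>x. \<Psi>1 (s, x) \<partial>lborel) \<partial>lborel)"
      unfolding lborel_prod by simp
    also have "\<dots> = (\<integral>s. deriv \<kappa> s * At k \<psi> s \<partial>lborel)"
      by (simp add: \<Psi>1_def At_def)
    finally show ?thesis .
  qed
  finally show ?thesis using E2 E3 by (simp add: algebra_simps)
qed

end

definition ker :: "real \<Rightarrow> real \<Rightarrow> real \<Rightarrow> real" where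
  "ker \<tau> h s = bump ((s - \<tau>) / h) / (c0 * h)"

lemma ker_nonneg: "0 < h \<Longrightarrow> 0 \<le> ker \<tau> h s"
  using c0_pos bump_nonneg by (simp add: ker_def)

lemma ker_le: "0 < h \<Longrightarrow> ker \<tau> h s \<le> (1 / (c0 * h)) * indicator {\<tau>-h..\<tau>+h} s"
proof -
  assume h: "0 < h"
  show ?thesis
  proof (cases "s \<in> {\<tau>-h..\<tau>+h}")
    case True
    have p: "0 < c0 * h" using c0_pos h by simp
    have "ker \<tau> h s \<le> 1 / (c0 * h)" unfolding ker_def
      by (rule divide_right_mono[OF bump_le1]) (use p in simp)
    then show ?thesis using True by simp
  next
    case False
    then have "(s - \<tau>) / h \<le> -1 \<or> (s - \<tau>) / h \<ge> 1" using h by (auto simp: field_simps)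
    then have "bump ((s - \<tau>) / h) = 0" by (rule bump_zero)
    then show ?thesis using False by (simp add: ker_def)
  qed
qed

lemma ker_cont: "continuous_on UNIV (ker \<tau> h)"
  unfolding ker_def[abs_def] divide_inverse
  by (intro continuous_intros continuous_on_compose2[OF bump_cont[of UNIV]]) auto

lemma ker_meas[measurable]: "ker \<tau> h \<in> borel_measurable borel"
  by (intro borel_measurable_continuous_onI ker_cont)

lemma rho_shift_deriv: "0 < h \<Longrightarrow> ((\<lambda>s. rho ((s - \<tau>) / h)) has_real_derivative ker \<tau> h s) (at s)"
proof -
  assume h: "0 < h"
  have l: "((\<lambda>s. (s - \<tau>) / h) has_real_derivative 1 / h) (at s)"
    using h by (auto intro!: derivative_eq_intros)
  have "((\<lambda>s. rho ((s - \<tau>) / h)) has_real_derivative bump ((s - \<tau>) / h) / c0 * (1 / h)) (at s)"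
    using DERIV_chain2[where f=rho, OF rho_deriv l] .
  then show ?thesis by (simp add: ker_def)
qed

lemma ker_int: "0 < h \<Longrightarrow> (\<integral>s. ker \<tau> h s \<partial>lborel) = 1"
proof -
  assume h: "0 < h"
  have "integral\<^sup>L lborel (\<lambda>s. indicator {\<tau>-h..\<tau>+h} s *\<^sub>R ker \<tau> h s) = rho (((\<tau>+h) - \<tau>) / h) - rho (((\<tau>-h) - \<tau>) / h)"
  proof (rule integral_FTC_atLeastAtMost)
    show "\<tau> - h \<le> \<tau> + h" using h by simp
    show "continuous_on {\<tau> - h..\<tau> + h} (ker \<tau> h)" using ker_cont by (rule continuous_on_subset) auto
    fix x
    show "((\<lambda>s. rho ((s - \<tau>) / h)) has_vector_derivative ker \<tau> h x) (at x within {\<tau> - h..\<tau> + h})"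
      using rho_shift_deriv[OF h, of \<tau> x]
      by (simp add: has_real_derivative_iff_has_vector_derivative has_vector_derivative_at_within)
  qed
  also have "\<dots> = 1" using h by (simp add: rho_one rho_zero)
  also have "(\<lambda>s. indicator {\<tau>-h..\<tau>+h} s *\<^sub>R ker \<tau> h s) = ker \<tau> h"
  proof
    fix s show "indicator {\<tau>-h..\<tau>+h} s *\<^sub>R ker \<tau> h s = ker \<tau> h s"
      using ker_le[OF h, of \<tau> s] ker_nonneg[OF h, of \<tau> s] by (cases "s \<in> {\<tau>-h..\<tau>+h}") auto
  qed
  finally show ?thesis .
qed

lemma abs_integral_bdd:
  fixes f :: "real \<Rightarrow> real"
  assumes "f \<in> borel_measurable borel" "\<And>s. \<bar>f s\<bar> \<le> K * indicator {l..r} s"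
  shows "integrable lborel f"
  using integrable_bdd_cbox[of f K l r] assms by (simp add: measurable_lborel1)

lemma avg_conv:
  fixes A At' :: "real \<Rightarrow> real"
  assumes lp: "lebesgue_point A \<tau>" and tau: "0 < \<tau>"
    and mA[measurable]: "At' \<in> borel_measurable borel" and B: "\<And>s. \<bar>At' s\<bar> \<le> B"
    and ae: "AE s in lborel. s > 0 \<longrightarrow> At' s = A s"
  shows "((\<lambda>h. \<integral>s. ker \<tau> h s * At' s \<partial>lborel) \<longlongrightarrow> A \<tau>) (at_right 0)"
proof -
  define L where "L h = (LINT s:{\<tau> - h..\<tau> + h}|lebesgue. \<bar>A s - A \<tau>\<bar>)" for h
  have lim: "((\<lambda>h. (1 / (2 * h)) * L h) \<longlongrightarrow> 0) (at_right 0)"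
    using lp unfolding lebesgue_point_def L_def by auto
  have ev: "\<forall>\<^sub>F h in at_right 0. 0 < h \<and> h < \<tau> \<and> set_integrable lebesgue {\<tau> - h..\<tau> + h} A"
  proof -
    have e1: "\<forall>\<^sub>F h in at_right 0. 0 < h \<and> h < \<tau>"
      by (rule eventually_mono[OF eventually_at_right_real[of 0 \<tau>]]) (use tau in auto)
    have e2: "\<forall>\<^sub>F h in at_right 0. set_integrable lebesgue {\<tau> - h..\<tau> + h} A"
      using lp unfolding lebesgue_point_def by blast
    show ?thesis using eventually_conj[OF e1 e2] by simp
  qed
  have bound: "\<bar>(\<integral>s. ker \<tau> h s * At' s \<partial>lborel) - A \<tau>\<bar> \<le> (2 / c0) * ((1 / (2 * h)) * L h)"
    if h: "0 < h" "h < \<tau>" and si: "set_integrable lebesgue {\<tau> - h..\<tau> + h} A" for h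
  proof -
    have Bp: "0 \<le> B" using B[of 0] by linarith
    have i1: "integrable lborel (\<lambda>s. ker \<tau> h s * At' s)"
    proof (rule abs_integral_bdd)
      fix s
      have "\<bar>ker \<tau> h s * At' s\<bar> \<le> (1 / (c0 * h)) * indicator {\<tau>-h..\<tau>+h} s * B"
        unfolding abs_mult using ker_le[OF h(1)] ker_nonneg[OF h(1)] B Bp c0_pos h
        by (intro mult_mono) auto
      then show "\<bar>ker \<tau> h s * At' s\<bar> \<le> (B / (c0 * h)) * indicator {\<tau>-h..\<tau>+h} s" by (simp add: ac_simps)
    qed measurable
    have i2: "integrable lborel (ker \<tau> h)"
    proof (rule abs_integral_bdd)
      fix s show "\<bar>ker \<tau> h s\<bar> \<le> (1 / (c0 * h)) * indicator {\<tau>-h..\<tau>+h} s"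
        using ker_le[OF h(1)] ker_nonneg[OF h(1)] by simp
    qed measurable
    define G where "G s = (1 / (c0 * h)) * (indicator {\<tau>-h..\<tau>+h} s * \<bar>At' s - A \<tau>\<bar>)" for s
    have i3: "integrable lborel G"
    proof (rule abs_integral_bdd)
      fix s show "\<bar>G s\<bar> \<le> ((1 / (c0 * h)) * (B + \<bar>A \<tau>\<bar>)) * indicator {\<tau>-h..\<tau>+h} s"
        using B[of s] c0_pos h by (auto simp: G_def indicator_def intro!: divide_right_mono)
    qed (unfold G_def[abs_def], measurable)
    have "(\<integral>s. ker \<tau> h s * At' s \<partial>lborel) - A \<tau> = (\<integral>s. ker \<tau> h s * At' s \<partial>lborel) - (\<integral>s. ker \<tau> h s * A \<tau> \<partial>lborel)"
      using ker_int[OF h(1), of \<tau>] by simp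
    also have "\<dots> = (\<integral>s. ker \<tau> h s * At' s - ker \<tau> h s * A \<tau> \<partial>lborel)"
      using i1 i2 by (intro Bochner_Integration.integral_diff[symmetric]) auto
    finally have eq: "(\<integral>s. ker \<tau> h s * At' s \<partial>lborel) - A \<tau> = (\<integral>s. ker \<tau> h s * At' s - ker \<tau> h s * A \<tau> \<partial>lborel)" .
    have "\<bar>(\<integral>s. ker \<tau> h s * At' s - ker \<tau> h s * A \<tau> \<partial>lborel)\<bar> \<le> integral\<^sup>L lborel G"
    proof (rule integral_abs_bound_integral)
      show "integrable lborel (\<lambda>s. ker \<tau> h s * At' s - ker \<tau> h s * A \<tau>)" using i1 i2 by auto
      show "integrable lborel G" by (fact i3)
      fix s
      have "\<bar>ker \<tau> h s * At' s - ker \<tau> h s * A \<tau>\<bar> = ker \<tau> h s * \<bar>At' s - A \<tau>\<bar>"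
        using ker_nonneg[OF h(1)] by (simp add: abs_mult right_diff_distrib[symmetric])
      also have "\<dots> \<le> (1 / (c0 * h) * indicator {\<tau>-h..\<tau>+h} s) * \<bar>At' s - A \<tau>\<bar>"
        using ker_le[OF h(1), of \<tau> s] by (intro mult_right_mono) auto
      also have "\<dots> = G s" unfolding G_def by simp
      finally show "\<bar>ker \<tau> h s * At' s - ker \<tau> h s * A \<tau>\<bar> \<le> G s" .
    qed
    also have "integral\<^sup>L lborel G = (1 / (c0 * h)) * L h"
    proof -
      have "integral\<^sup>L lborel G = (1 / (c0 * h)) * (\<integral>s. indicator {\<tau>-h..\<tau>+h} s * \<bar>At' s - A \<tau>\<bar> \<partial>lborel)"
        unfolding G_def[abs_def] by (rule integral_mult_right_zero)
      also have "(\<integral>s. indicator {\<tau>-h..\<tau>+h} s * \<bar>At' s - A \<tau>\<bar> \<partial>lborel) = L h"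
      proof -
        have m0: "(\<lambda>s. indicator {\<tau>-h..\<tau>+h} s * \<bar>At' s - A \<tau>\<bar>) \<in> borel_measurable lborel"
          by (simp add: measurable_lborel1)
        have mA: "(\<lambda>s. indicator {\<tau>-h..\<tau>+h} s *\<^sub>R A s) \<in> borel_measurable lebesgue"
          using si unfolding set_integrable_def by auto
        have m1: "(\<lambda>s. indicator {\<tau>-h..\<tau>+h} s *\<^sub>R \<bar>A s - A \<tau>\<bar>) \<in> borel_measurable lebesgue"
        proof -
          have "(\<lambda>s. \<bar>indicator {\<tau>-h..\<tau>+h} s *\<^sub>R A s - indicator {\<tau>-h..\<tau>+h} s * A \<tau>\<bar>) \<in> borel_measurable lebesgue"
            using mA by (intro borel_measurable_abs borel_measurable_diff borel_measurable_times borel_measurable_const borel_measurable_indicator) auto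
          moreover have "(\<lambda>s. \<bar>indicator {\<tau>-h..\<tau>+h} s *\<^sub>R A s - indicator {\<tau>-h..\<tau>+h} s * A \<tau>\<bar>) =
             (\<lambda>s. indicator {\<tau>-h..\<tau>+h} s *\<^sub>R \<bar>A s - A \<tau>\<bar>)"
            by (auto simp: indicator_def fun_eq_iff)
          ultimately show ?thesis by simp
        qed
        have "(\<integral>s. indicator {\<tau>-h..\<tau>+h} s * \<bar>At' s - A \<tau>\<bar> \<partial>lborel)
            = (\<integral>s. indicator {\<tau>-h..\<tau>+h} s * \<bar>At' s - A \<tau>\<bar> \<partial>lebesgue)"
          using m0 by (intro integral_completion[symmetric]) auto
        also have "\<dots> = (\<integral>s. indicator {\<tau>-h..\<tau>+h} s *\<^sub>R \<bar>A s - A \<tau>\<bar> \<partial>lebesgue)"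
        proof (rule integral_cong_AE)
          show "(\<lambda>s. indicator {\<tau>-h..\<tau>+h} s * \<bar>At' s - A \<tau>\<bar>) \<in> borel_measurable lebesgue"
            using m0 by (intro measurable_completion)
          show "(\<lambda>s. indicator {\<tau>-h..\<tau>+h} s *\<^sub>R \<bar>A s - A \<tau>\<bar>) \<in> borel_measurable lebesgue" by (fact m1)
          show "AE s in lebesgue. indicator {\<tau>-h..\<tau>+h} s * \<bar>At' s - A \<tau>\<bar> = indicator {\<tau>-h..\<tau>+h} s *\<^sub>R \<bar>A s - A \<tau>\<bar>"
            using AE_completion[OF ae] by (rule eventually_mono) (use h in \<open>auto simp: indicator_def\<close>)
        qed
        also have "\<dots> = L h" by (simp add: L_def set_lebesgue_integral_def)
        finally show ?thesis .
      qed
      finally show ?thesis .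
    qed
    also have "(1 / (c0 * h)) * L h = (2 / c0) * ((1 / (2 * h)) * L h)" using h c0_pos by (simp add: field_simps)
    finally show ?thesis using eq by simp
  qed
  have "((\<lambda>h. (\<integral>s. ker \<tau> h s * At' s \<partial>lborel) - A \<tau>) \<longlongrightarrow> 0) (at_right 0)"
  proof (rule Lim_null_comparison)
    show "\<forall>\<^sub>F h in at_right 0. norm ((\<integral>s. ker \<tau> h s * At' s \<partial>lborel) - A \<tau>) \<le> (2 / c0) * ((1 / (2 * h)) * L h)"
      using ev by (rule eventually_mono) (use bound in auto)
    show "((\<lambda>h. (2 / c0) * ((1 / (2 * h)) * L h)) \<longlongrightarrow> 0) (at_right 0)"
      by (rule tendsto_mult_right_zero[OF lim])
  qed
  then show ?thesis by (simp add: LIM_zero_iff)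
qed

lemma abs_int_le:
  fixes f :: "real \<Rightarrow> real"
  assumes "f \<in> borel_measurable borel" "\<And>s. \<bar>f s\<bar> \<le> K * indicator {l..r} s" "l \<le> r"
  shows "\<bar>\<integral>s. f s \<partial>lborel\<bar> \<le> K * (r - l)"
proof -
  have i: "integrable lborel f" by (rule abs_integral_bdd[OF assms(1,2)])
  have ig: "integrable lborel (\<lambda>s. K * indicator {l..r} s)"
    using emeasure_lborel_cbox_finite[of l r]
    by (intro integrable_mult_right integrable_real_indicator) (auto simp: cbox_interval)
  have "\<bar>\<integral>s. f s \<partial>lborel\<bar> \<le> (\<integral>s. K * indicator {l..r} s \<partial>lborel)"
    by (rule integral_abs_bound_integral[OF i ig assms(2)])
  also have "\<dots> = K * (r - l)" using assms(3) by simp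
  finally show ?thesis .
qed

context ent_ctx
begin

definition A :: "real \<Rightarrow> (real \<Rightarrow> real) \<Rightarrow> real \<Rightarrow> real" where
  "A k \<psi> s = (LINT x:{0..1}|lebesgue. \<bar>u s x - k\<bar> * \<psi> x)"

lemma At_meas:
  assumes [measurable]: "\<psi> \<in> borel_measurable borel"
  shows "At k \<psi> \<in> borel_measurable borel"
proof -
  have [measurable]: "wb \<in> borel_measurable (lborel \<Otimes>\<^sub>M lborel)" by (rule wb_pair_meas)
  have "(\<lambda>s. \<integral>x. \<bar>wb (s, x) - k\<bar> * \<psi> x \<partial>lborel) \<in> borel_measurable lborel"
    by (rule lborel.borel_measurable_lebesgue_integral) measurable
  then show ?thesis unfolding At_def[abs_def] by (simp add: measurable_lborel1)
qed

lemma At_bdd: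
  assumes [measurable]: "\<psi> \<in> borel_measurable borel" and "\<And>x. \<bar>\<psi> x\<bar> \<le> Bp"
    and "\<And>x. x \<notin> {c..d} \<Longrightarrow> \<psi> x = 0" "c \<le> d"
  shows "\<bar>At k \<psi> s\<bar> \<le> ((M + \<bar>k\<bar>) * Bp) * (d - c)"
  unfolding At_def
proof (rule abs_int_le)
  show "(\<lambda>x. \<bar>wb (s, x) - k\<bar> * \<psi> x) \<in> borel_measurable borel" by measurable
  fix x
  show "\<bar>\<bar>wb (s, x) - k\<bar> * \<psi> x\<bar> \<le> (M + \<bar>k\<bar>) * Bp * indicator {c..d} x"
  proof (cases "x \<in> {c..d}")
    case True
    have "\<bar>wb (s, x) - k\<bar> \<le> M + \<bar>k\<bar>" using wb(2)[of "(s,x)"] by linarith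
    then show ?thesis using True assms(2)[of x] unfolding abs_mult by (auto intro!: mult_mono)
  next
    case False then show ?thesis using assms(3) by simp
  qed
qed (fact assms)

lemma At_eq_A:
  assumes [measurable]: "\<psi> \<in> borel_measurable borel"
    and pz: "\<And>x. x \<notin> {c..d} \<Longrightarrow> \<psi> x = 0" and cd: "0 \<le> c" "d \<le> 1"
  shows "AE s in lborel. s > 0 \<longrightarrow> At k \<psi> s = A k \<psi> s"
  using wb_sections
proof (rule eventually_mono)
  fix s assume h: "0 < s \<longrightarrow> (AE x in lborel. wb (s, x) = u s x)"
  show "0 < s \<longrightarrow> At k \<psi> s = A k \<psi> s"
  proof
    assume s: "0 < s"
    have m0: "(\<lambda>x. \<bar>wb (s, x) - k\<bar> * \<psi> x) \<in> borel_measurable lborel" by (simp add: measurable_lborel1)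
    have pz': "\<psi> x \<noteq> 0 \<Longrightarrow> x \<in> {0..1}" for x using pz[of x] cd by force
    have ae: "AE x in lebesgue. \<bar>wb (s, x) - k\<bar> * \<psi> x = indicator {0..1} x *\<^sub>R (\<bar>u s x - k\<bar> * \<psi> x)"
      using AE_completion[OF h[rule_format, OF s]]
      by (rule eventually_mono) (use pz' in \<open>auto simp: indicator_def\<close>)
    have m1: "(\<lambda>x. \<bar>wb (s, x) - k\<bar> * \<psi> x) \<in> borel_measurable lebesgue"
      using m0 by (rule measurable_completion)
    have m2: "(\<lambda>x. indicator {0..1} x *\<^sub>R (\<bar>u s x - k\<bar> * \<psi> x)) \<in> borel_measurable lebesgue"
      by (rule borel_measurable_AE[OF m1 ae])
    have "At k \<psi> s = (\<integral>x. \<bar>wb (s, x) - k\<bar> * \<psi> x \<partial>lebesgue)"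
      unfolding At_def using m0 by (simp add: integral_completion)
    also have "\<dots> = (\<integral>x. indicator {0..1} x *\<^sub>R (\<bar>u s x - k\<bar> * \<psi> x) \<partial>lebesgue)"
      by (rule integral_cong_AE[OF m1 m2 ae])
    also have "\<dots> = A k \<psi> s" by (simp add: A_def set_lebesgue_integral_def)
    finally show "At k \<psi> s = A k \<psi> s" .
  qed
qed

lemma keyK:
  assumes sp: "smooth \<psi>" and p0: "\<And>x. 0 \<le> \<psi> x" and cd: "0 \<le> c" "c \<le> d" "d \<le> 1"
    and pz: "\<And>x. x \<notin> {c..d} \<Longrightarrow> \<psi> x = 0"
    and Cb: "0 \<le> Cb" "\<And>v x. \<bar>v\<bar> \<le> M \<Longrightarrow>
     \<bar>sgn (v - k) * (\<phi> v - \<phi> k) * deriv \<psi> x + \<bar>g v - g k\<bar> * deriv (deriv \<psi>) x\<bar> \<le> Cb * indicator {c..d} x"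
    and t: "0 < \<tau>1" "\<tau>1 < \<tau>2"
    and lp1: "lebesgue_point (A k \<psi>) \<tau>1" and lp2: "lebesgue_point (A k \<psi>) \<tau>2"
  shows "A k \<psi> \<tau>2 \<le> A k \<psi> \<tau>1 + Cb * (\<tau>2 - \<tau>1) * (d - c)"
proof -
  have [measurable]: "\<psi> \<in> borel_measurable borel"
    by (intro borel_measurable_continuous_onI smooth_cont sp)
  obtain Bp where Bp: "\<And>x. \<bar>\<psi> x\<bar> \<le> Bp"
    using bounded_cs[of \<psi> c d] pz smooth_cont[OF sp] by blast
  define BA where "BA = ((M + \<bar>k\<bar>) * Bp) * (d - c)"
  have AtB: "\<bar>At k \<psi> s\<bar> \<le> BA" for s unfolding BA_def by (rule At_bdd[OF _ Bp pz cd(2)]) measurable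
  have Atm[measurable]: "At k \<psi> \<in> borel_measurable borel" by (rule At_meas) measurable
  have ae: "AE s in lborel. s > 0 \<longrightarrow> At k \<psi> s = A k \<psi> s" by (rule At_eq_A[OF _ pz cd(1,3)]) measurable
  define F where "F h = (\<integral>s. ker \<tau>1 h s * At k \<psi> s \<partial>lborel) - (\<integral>s. ker \<tau>2 h s * At k \<psi> s \<partial>lborel)
      + Cb * ((\<tau>2 + h) - (\<tau>1 - h)) * (d - c)" for h
  have lim: "(F \<longlongrightarrow> A k \<psi> \<tau>1 - A k \<psi> \<tau>2 + Cb * ((\<tau>2 + 0) - (\<tau>1 - 0)) * (d - c)) (at_right 0)"
    unfolding F_def
    by (intro tendsto_intros avg_conv[OF lp1 t(1) Atm AtB ae] avg_conv[OF lp2 _ Atm AtB ae]) (use t in auto)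
  have ev: "\<forall>\<^sub>F h in at_right 0. 0 \<le> F h"
  proof (rule eventually_mono[OF eventually_at_right_real[of 0 \<tau>1]])
    show "(0::real) < \<tau>1" by (fact t(1))
    fix h assume "h \<in> {0<..<\<tau>1}"
    then have h: "0 < h" "h < \<tau>1" by auto
    define \<kappa> where "\<kappa> s = rho ((s - \<tau>1) / h) - rho ((s - \<tau>2) / h)" for s
    have sk: "smooth \<kappa>"
    proof -
      have e: "\<kappa> = (\<lambda>s. 1 * rho ((1/h) * s + (- \<tau>1 / h)) + (-1) * rho ((1/h) * s + (- \<tau>2 / h)))"
        by (auto simp: \<kappa>_def fun_eq_iff diff_divide_distrib)
      show ?thesis unfolding e by (intro smooth_add smooth_affine rho_smooth)
    qed
    have dk: "deriv \<kappa> s = ker \<tau>1 h s - ker \<tau>2 h s" for s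
      unfolding \<kappa>_def[abs_def]
      by (intro DERIV_imp_deriv DERIV_diff rho_shift_deriv h)
    have k0: "0 \<le> \<kappa> s" for s
    proof -
      have "(s - \<tau>2) / h \<le> (s - \<tau>1) / h" using t h by (intro divide_right_mono) auto
      then show ?thesis unfolding \<kappa>_def using rho_mono by auto
    qed
    have k1: "\<kappa> s \<le> 1" for s unfolding \<kappa>_def using rho_bounds[of "(s - \<tau>1) / h"] rho_bounds[of "(s - \<tau>2) / h"] by auto
    have kz: "\<kappa> s = 0" if "s \<notin> {\<tau>1 - h..\<tau>2 + h}" for s
    proof (cases "s < \<tau>1 - h")
      case True
      then have "(s - \<tau>1) / h \<le> -1" "(s - \<tau>2) / h \<le> -1" using h t by (auto simp: field_simps)
      then show ?thesis by (simp add: \<kappa>_def rho_zero)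
    next
      case False
      then have "s > \<tau>2 + h" using that by auto
      then have "(s - \<tau>1) / h \<ge> 1" "(s - \<tau>2) / h \<ge> 1" using h t by (auto simp: field_simps)
      then show ?thesis by (simp add: \<kappa>_def rho_one)
    qed
    have K0: "0 \<le> (\<integral>s. deriv \<kappa> s * At k \<psi> s \<partial>lborel) + Cb * ((\<tau>2 + h) - (\<tau>1 - h)) * (d - c)"
      by (rule key0[OF sk k0 k1 _ _ kz sp p0 cd(2) pz Cb]) (use h t in auto)
    have int: "integrable lborel (\<lambda>s. ker \<tau> h s * At k \<psi> s)" for \<tau>
    proof (rule abs_integral_bdd)
      fix s
      have "\<bar>ker \<tau> h s * At k \<psi> s\<bar> \<le> (1 / (c0 * h)) * indicator {\<tau>-h..\<tau>+h} s * BA"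
        unfolding abs_mult using ker_le[OF h(1)] ker_nonneg[OF h(1)] AtB AtB[of 0] c0_pos h
        by (intro mult_mono) (auto intro: order_trans[OF abs_ge_zero])
      then show "\<bar>ker \<tau> h s * At k \<psi> s\<bar> \<le> (BA / (c0 * h)) * indicator {\<tau>-h..\<tau>+h} s" by (simp add: ac_simps)
    qed measurable
    have "(\<integral>s. deriv \<kappa> s * At k \<psi> s \<partial>lborel) = (\<integral>s. ker \<tau>1 h s * At k \<psi> s - ker \<tau>2 h s * At k \<psi> s \<partial>lborel)"
      unfolding dk by (simp add: left_diff_distrib)
    also have "\<dots> = (\<integral>s. ker \<tau>1 h s * At k \<psi> s \<partial>lborel) - (\<integral>s. ker \<tau>2 h s * At k \<psi> s \<partial>lborel)"
      by (rule Bochner_Integration.integral_diff[OF int int])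
    finally show "0 \<le> F h" using K0 unfolding F_def by simp
  qed
  have "0 \<le> A k \<psi> \<tau>1 - A k \<psi> \<tau>2 + Cb * ((\<tau>2 + 0) - (\<tau>1 - 0)) * (d - c)"
    by (rule tendsto_lowerbound[OF lim ev]) simp
  then show ?thesis by simp
qed

end

lemma int_ind_Icc: "l \<le> r \<Longrightarrow> integral\<^sup>L lebesgue (indicator {l..r} :: real \<Rightarrow> real) = r - l"
proof -
  assume lr: "l \<le> r"
  have "integral\<^sup>L lebesgue (indicator {l..r} :: real \<Rightarrow> real) = integral\<^sup>L lborel (indicator {l..r} :: real \<Rightarrow> real)"
    by (intro integral_completion) auto
  also have "\<dots> = r - l" using lr by (simp add: measure_def)
  finally show ?thesis .
qed

lemma si01:
  fixes f :: "real \<Rightarrow> real"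
  assumes "(\<lambda>x. indicator {l..r} x *\<^sub>R f x) \<in> borel_measurable lebesgue" "\<And>x. x \<in> {l..r} \<Longrightarrow> \<bar>f x\<bar> \<le> B"
  shows "set_integrable lebesgue {l..r} f"
  unfolding set_integrable_def
proof -
  have i: "integrable lebesgue (\<lambda>x. B * indicator {l..r} x :: real)"
  proof (intro integrable_mult_right)
    have "integrable lborel (indicator {l..r} :: real \<Rightarrow> real)"
      using emeasure_lborel_cbox_finite[of l r] by (intro integrable_real_indicator) (auto simp: cbox_interval)
    then show "integrable lebesgue (indicator {l..r} :: real \<Rightarrow> real)"
      by (subst integrable_completion) auto
  qed
  have "AE x in lebesgue. norm (indicator {l..r} x *\<^sub>R f x) \<le> norm (B * indicator {l..r} x)"
    using assms(2) by (intro AE_I2) (auto simp: indicator_def intro: order_trans[OF _ abs_ge_self])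
  from Bochner_Integration.integrable_bound[OF i assms(1) this]
  show "integrable lebesgue (\<lambda>x. indicator {l..r} x *\<^sub>R f x)" .
qed

locale fin_ctx = ent_ctx +
  fixes E :: "real set" and t0 :: real
  assumes E_def: "E = common_lebesgue_points u M" and t0E: "t0 \<in> E"
begin

lemma E_pos: "t \<in> E \<Longrightarrow> 0 < t" by (simp add: E_def common_lebesgue_points_def)

lemma lp_E: "t \<in> E \<Longrightarrow> continuous_on {-M..M} p \<Longrightarrow> set_integrable lebesgue {0..1} f \<Longrightarrow>
   lebesgue_point (\<lambda>t. LINT x:{0..1}|lebesgue. p (u t x) * f x) t"
  by (simp add: E_def common_lebesgue_points_def)

lemma ae_sec: "AE s in lborel. s > 0 \<longrightarrow> (\<lambda>x. indicator {0..1} x *\<^sub>R u s x) \<in> borel_measurable lebesgue"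
  using wb_sections
proof (rule eventually_mono)
  fix s assume h: "0 < s \<longrightarrow> (AE x in lborel. wb (s, x) = u s x)"
  show "0 < s \<longrightarrow> (\<lambda>x. indicator {0..1} x *\<^sub>R u s x) \<in> borel_measurable lebesgue"
  proof
    assume s: "0 < s"
    have m: "(\<lambda>x. indicator {0..1} x *\<^sub>R wb (s, x)) \<in> borel_measurable lebesgue"
      by (intro measurable_completion) (simp add: measurable_lborel1)
    show "(\<lambda>x. indicator {0..1} x *\<^sub>R u s x) \<in> borel_measurable lebesgue"
      using AE_completion[OF h[rule_format, OF s]]
      by (intro borel_measurable_AE[OF m]) (auto elim: eventually_mono)
  qed
qed

lemma E_meas: assumes t: "t \<in> E" shows "(\<lambda>x. indicator {0..1} x *\<^sub>R u t x) \<in> borel_measurable lebesgue"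
proof (rule ccontr)
  assume nm: "(\<lambda>x. indicator {0..1} x *\<^sub>R u t x) \<notin> borel_measurable lebesgue"
  have tp: "0 < t" using E_pos[OF t] .
  have one: "set_integrable lebesgue {0..1::real} (\<lambda>x. 1::real)"
    by (rule si01[of 0 1 "\<lambda>_. 1" 1]) (auto intro: borel_measurable_indicator)
  define I1 where "I1 s = (LINT x:{0..1}|lebesgue. (\<lambda>v. v) (u s x) * (\<lambda>x. 1) x)" for s
  define I2 where "I2 s = (LINT x:{0..1}|lebesgue. (\<lambda>v. v + 1) (u s x) * (\<lambda>x. 1) x)" for s
  have lp1: "lebesgue_point I1 t" unfolding I1_def[abs_def]
    by (rule lp_E[OF t _ one]) (intro continuous_intros)
  have lp2: "lebesgue_point I2 t" unfolding I2_def[abs_def]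
    by (rule lp_E[OF t _ one]) (intro continuous_intros)
  have I1t: "I1 t = 0"
  proof -
    have "\<not> integrable lebesgue (\<lambda>x. indicator {0..1} x *\<^sub>R (u t x * 1))"
      using nm borel_measurable_integrable by auto
    then show ?thesis by (simp add: I1_def set_lebesgue_integral_def not_integrable_integral_eq)
  qed
  have I2t: "I2 t = 0"
  proof -
    have "\<not> integrable lebesgue (\<lambda>x. indicator {0..1} x *\<^sub>R ((u t x + 1) * 1))"
    proof
      assume "integrable lebesgue (\<lambda>x. indicator {0..1} x *\<^sub>R ((u t x + 1) * 1))"
      then have "(\<lambda>x. indicator {0..1} x *\<^sub>R ((u t x + 1) * 1)) \<in> borel_measurable lebesgue"
        by (rule borel_measurable_integrable)
      then have "(\<lambda>x. indicator {0..1} x *\<^sub>R ((u t x + 1) * 1) - indicator {0..1} x) \<in> borel_measurable lebesgue"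
        by (intro borel_measurable_diff borel_measurable_indicator) auto
      moreover have "(\<lambda>x. indicator {0..1} x *\<^sub>R ((u t x + 1) * 1) - indicator {0..1} x) = (\<lambda>x. indicator {0..1} x *\<^sub>R u t x)"
        by (auto simp: fun_eq_iff indicator_def)
      ultimately show False using nm by simp
    qed
    then show ?thesis by (simp add: I2_def set_lebesgue_integral_def not_integrable_integral_eq)
  qed
  have ae12: "AE s in lebesgue. s > 0 \<longrightarrow> I2 s = I1 s + 1"
    using AE_completion[OF ae_sec]
  proof (rule eventually_mono)
    fix s assume h: "0 < s \<longrightarrow> (\<lambda>x. indicator {0..1} x *\<^sub>R u s x) \<in> borel_measurable lebesgue"
    show "0 < s \<longrightarrow> I2 s = I1 s + 1"
    proof
      assume s: "0 < s"
      have m: "(\<lambda>x. indicator {0..1} x *\<^sub>R u s x) \<in> borel_measurable lebesgue" using h s by auto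
      have i1: "set_integrable lebesgue {0..1} (\<lambda>x. u s x)"
        by (rule si01[OF m]) (use bnd' s in auto)
      have "I2 s = (LINT x:{0..1}|lebesgue. u s x + 1)" by (simp add: I2_def)
      also have "\<dots> = (LINT x:{0..1}|lebesgue. u s x) + (LINT x:{0..1::real}|lebesgue. 1)"
        using set_integral_add(2)[OF i1 one] by simp
      also have "(LINT x:{0..1::real}|lebesgue. (1::real)) = 1"
        using int_ind_Icc[of 0 1] by (simp add: set_lebesgue_integral_def)
      finally show "I2 s = I1 s + 1" by (simp add: I1_def)
    qed
  qed
  define L1 where "L1 h = (1 / (2 * h)) * (LINT s:{t - h..t + h}|lebesgue. \<bar>I1 s - I1 t\<bar>)" for h
  define L2 where "L2 h = (1 / (2 * h)) * (LINT s:{t - h..t + h}|lebesgue. \<bar>I2 s - I2 t\<bar>)" for h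
  have lim: "((\<lambda>h. L1 h + L2 h) \<longlongrightarrow> 0 + 0) (at_right 0)"
    using lp1 lp2 unfolding lebesgue_point_def L1_def L2_def by (intro tendsto_add) auto
  have ev: "\<forall>\<^sub>F h in at_right 0. 1 \<le> L1 h + L2 h"
  proof -
    have e1: "\<forall>\<^sub>F h in at_right 0. 0 < h \<and> h < t"
      by (rule eventually_mono[OF eventually_at_right_real[of 0 t]]) (use tp in auto)
    have e2: "\<forall>\<^sub>F h in at_right 0. set_integrable lebesgue {t - h..t + h} I1 \<and> set_integrable lebesgue {t - h..t + h} I2"
      using lp1 lp2 unfolding lebesgue_point_def by (intro eventually_conj) auto
    show ?thesis using eventually_conj[OF e1 e2]
    proof (rule eventually_mono)
      fix h assume h: "(0 < h \<and> h < t) \<and> set_integrable lebesgue {t - h..t + h} I1 \<and> set_integrable lebesgue {t - h..t + h} I2"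
      have s1: "set_integrable lebesgue {t - h..t + h} (\<lambda>s. \<bar>I1 s\<bar>)" using h by (intro set_integrable_abs) auto
      have s2: "set_integrable lebesgue {t - h..t + h} (\<lambda>s. \<bar>I2 s\<bar>)" using h by (intro set_integrable_abs) auto
      have "2 * h = integral\<^sup>L lebesgue (indicator {t - h..t + h} :: real \<Rightarrow> real)"
        using h int_ind_Icc[of "t - h" "t + h"] by simp
      also have "\<dots> \<le> (LINT s:{t - h..t + h}|lebesgue. \<bar>I1 s\<bar> + \<bar>I2 s\<bar>)"
        unfolding set_lebesgue_integral_def
      proof (rule integral_mono_AE)
        show "integrable lebesgue (indicator {t - h..t + h} :: real \<Rightarrow> real)"
        proof -
          have "set_integrable lebesgue {t - h..t + h} (\<lambda>_. 1::real)"
            by (rule si01[of "t - h" "t + h" "\<lambda>_. 1" 1]) (auto intro: borel_measurable_indicator)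
          then show ?thesis by (simp add: set_integrable_def)
        qed
        show "integrable lebesgue (\<lambda>x. indicator {t - h..t + h} x *\<^sub>R (\<bar>I1 x\<bar> + \<bar>I2 x\<bar>))"
          using set_integral_add(1)[OF s1 s2] by (simp add: set_integrable_def)
        show "AE x in lebesgue. indicator {t - h..t + h} x \<le> indicator {t - h..t + h} x *\<^sub>R (\<bar>I1 x\<bar> + \<bar>I2 x\<bar>)"
          using ae12
        proof (rule eventually_mono)
          fix x assume a: "0 < x \<longrightarrow> I2 x = I1 x + 1"
          show "indicator {t - h..t + h} x \<le> indicator {t - h..t + h} x *\<^sub>R (\<bar>I1 x\<bar> + \<bar>I2 x\<bar>)"
          proof (cases "x \<in> {t - h..t + h}")
            case True
            then have "0 < x" using h by auto
            then have "I2 x = I1 x + 1" using a by blast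
            then have "1 \<le> \<bar>I1 x\<bar> + \<bar>I2 x\<bar>" by linarith
            then show ?thesis using True by simp
          qed simp
        qed
      qed
      also have "\<dots> = (LINT s:{t - h..t + h}|lebesgue. \<bar>I1 s\<bar>) + (LINT s:{t - h..t + h}|lebesgue. \<bar>I2 s\<bar>)"
        by (rule set_integral_add(2)[OF s1 s2])
      finally have "2 * h \<le> (LINT s:{t - h..t + h}|lebesgue. \<bar>I1 s\<bar>) + (LINT s:{t - h..t + h}|lebesgue. \<bar>I2 s\<bar>)" .
      then show "1 \<le> L1 h + L2 h" using h unfolding L1_def L2_def I1t I2t by (simp add: field_simps)
    qed
  qed
  have "1 \<le> (0::real) + 0" by (rule tendsto_lowerbound[OF lim ev]) simp
  then show False by simp
qed

end

lemma meas_pair: fixes f :: "real \<times> real \<Rightarrow> real" shows "f \<in> borel_measurable (borel \<Otimes>\<^sub>M borel) \<Longrightarrow> f \<in> borel_measurable borel"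
  by (simp add: borel_prod)

definition psie :: "real \<Rightarrow> real \<Rightarrow> real \<Rightarrow> real \<Rightarrow> real" where
  "psie a b e x = rho ((2/e) * x + (- 2 * a / e - 1)) * rho ((-2/e) * x + (2 * b / e - 1))"

lemma psie_smooth: "smooth (psie a b e)"
proof -
  have "psie a b e = (\<lambda>x. (1 * rho ((2/e) * x + (- 2 * a / e - 1))) * (1 * rho ((-2/e) * x + (2 * b / e - 1))))"
    by (auto simp: psie_def fun_eq_iff)
  show ?thesis unfolding \<open>psie a b e = _\<close> by (intro smooth_mult smooth_affine rho_smooth)
qed

lemma psie_bounds: "0 \<le> psie a b e x" "psie a b e x \<le> 1"
  unfolding psie_def using rho_bounds[of "(2/e) * x + (- 2 * a / e - 1)"] rho_bounds[of "(-2/e) * x + (2 * b / e - 1)"]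
  by (auto intro: mult_nonneg_nonneg mult_le_one)

lemma psie_zero: "0 < e \<Longrightarrow> x \<notin> {a..b} \<Longrightarrow> psie a b e x = 0"
proof -
  assume e: "0 < e" and x: "x \<notin> {a..b}"
  then consider "x < a" | "x > b" by auto
  then show ?thesis
  proof cases
    case 1 then have "(2/e) * x + (- 2 * a / e - 1) \<le> -1" using e by (simp add: field_simps)
    then show ?thesis by (simp add: psie_def rho_zero)
  next
    case 2 then have "(-2/e) * x + (2 * b / e - 1) \<le> -1" using e by (simp add: field_simps)
    then show ?thesis by (simp add: psie_def rho_zero)
  qed
qed

lemma psie_one: "0 < e \<Longrightarrow> x \<in> {a+e..b-e} \<Longrightarrow> psie a b e x = 1"
proof -
  assume e: "0 < e" and x: "x \<in> {a+e..b-e}"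
  have q1: "(2/e) * x + (- 2 * a / e - 1) = 2 * ((x - a) / e) - 1"
    by (simp add: diff_divide_distrib algebra_simps)
  have q2: "(-2/e) * x + (2 * b / e - 1) = 2 * ((b - x) / e) - 1"
    by (simp add: diff_divide_distrib algebra_simps)
  have r1: "(x - a) / e \<ge> 1" using e x by (simp add: le_divide_eq)
  have r2: "(b - x) / e \<ge> 1" using e x by (simp add: le_divide_eq)
  have "(2/e) * x + (- 2 * a / e - 1) \<ge> 1" unfolding q1 using r1 by linarith
  moreover have "(-2/e) * x + (2 * b / e - 1) \<ge> 1" unfolding q2 using r2 by linarith
  ultimately show ?thesis by (simp add: psie_def rho_one)
qed

lemma psie_gap: "0 < e \<Longrightarrow> indicator {a..b} x - psie a b e x \<le> indicator {a..a+e} x + (indicator {b-e..b} x :: real)"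
proof -
  assume e: "0 < e"
  show ?thesis
  proof (cases "x \<in> {a..b}")
    case False then show ?thesis using psie_zero[OF e False] by (simp add: indicator_def)
  next
    case True
    show ?thesis
    proof (cases "x \<in> {a+e..b-e}")
      case True then show ?thesis using psie_one[OF e] by (simp add: indicator_def)
    next
      case False
      then have "x \<in> {a..a+e} \<or> x \<in> {b-e..b}" using \<open>x \<in> {a..b}\<close> by auto
      then show ?thesis using psie_bounds[of a b e x] by (auto simp: indicator_def)
    qed
  qed
qed

context fin_ctx
begin

lemma meas_comp:
  fixes H :: "real \<Rightarrow> real \<Rightarrow> real"
  assumes t: "t \<in> E" and H: "case_prod H \<in> borel_measurable borel"
  shows "(\<lambda>x. indicator {0..1} x *\<^sub>R H (u t x) x) \<in> borel_measurable lebesgue"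
proof -
  define U where "U x = indicator {0..1} x *\<^sub>R u t x" for x
  have U[measurable]: "U \<in> borel_measurable lebesgue" unfolding U_def[abs_def] by (rule E_meas[OF t])
  have [measurable]: "(\<lambda>x::real. x) \<in> borel_measurable lebesgue"
    by (intro measurable_completion) (simp add: measurable_lborel1)
  have H'[measurable]: "case_prod H \<in> borel_measurable (borel \<Otimes>\<^sub>M borel)" using H by (simp add: borel_prod)
  have "(\<lambda>x. case_prod H (U x, x)) \<in> borel_measurable lebesgue"
    by measurable
  then have m: "(\<lambda>x. indicator {0..1} x *\<^sub>R H (U x) x) \<in> borel_measurable lebesgue"
    by (intro borel_measurable_scaleR borel_measurable_indicator) auto
  have eq: "(\<lambda>x. indicator {0..1} x *\<^sub>R H (U x) x) = (\<lambda>x. indicator {0..1} x *\<^sub>R H (u t x) x)"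
    by (auto simp: fun_eq_iff U_def indicator_def)
  show ?thesis using m unfolding eq .
qed

lemma int_comp:
  fixes H :: "real \<Rightarrow> real \<Rightarrow> real"
  assumes t: "t \<in> E" and H: "case_prod H \<in> borel_measurable borel"
    and B: "\<And>v x. \<bar>v\<bar> \<le> M \<Longrightarrow> x \<in> {0..1} \<Longrightarrow> \<bar>H v x\<bar> \<le> B"
  shows "set_integrable lebesgue {0..1} (\<lambda>x. H (u t x) x)"
  by (rule si01[OF meas_comp[OF t H]]) (use B bnd' E_pos[OF t] in auto)

lemma psie_meas[measurable]: "psie a b e \<in> borel_measurable borel"
  by (intro borel_measurable_continuous_onI smooth_cont psie_smooth)

lemma set_int_ind_le: "l \<le> r \<Longrightarrow> (LINT x:{0..1}|lebesgue. (indicator {l..r} x :: real)) \<le> r - l"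
proof -
  assume lr: "l \<le> r"
  have "(LINT x:{0..1}|lebesgue. (indicator {l..r} x :: real)) = integral\<^sup>L lebesgue (\<lambda>x. indicator {0..1} x * (indicator {l..r} x :: real))"
    by (simp add: set_lebesgue_integral_def)
  also have "\<dots> \<le> integral\<^sup>L lebesgue (indicator {l..r} :: real \<Rightarrow> real)"
  proof (rule integral_mono)
    have i: "integrable lebesgue (indicator {l..r} :: real \<Rightarrow> real)"
    proof -
      have "set_integrable lebesgue {l..r} (\<lambda>_. 1::real)"
        by (rule si01[of l r "\<lambda>_. 1" 1]) (auto intro: borel_measurable_indicator)
      then show ?thesis by (simp add: set_integrable_def)
    qed
    show "integrable lebesgue (indicator {l..r} :: real \<Rightarrow> real)" by (fact i)
    have "set_integrable lebesgue {0..1::real} (indicator {l..r} :: real \<Rightarrow> real)"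
      by (rule si01[of 0 1 _ 1], intro borel_measurable_scaleR borel_measurable_indicator, auto simp: indicator_def)
    then show "integrable lebesgue (\<lambda>x. indicator {0..1} x * (indicator {l..r} x :: real))"
      by (simp add: set_integrable_def)
  qed (auto simp: indicator_def)
  also have "\<dots> = r - l" by (rule int_ind_Icc[OF lr])
  finally show ?thesis .
qed

definition Lam :: "real \<Rightarrow> real \<Rightarrow> real set \<Rightarrow> real" where
  "Lam t k T = (LINT x:{0..1}|lebesgue. \<bar>u t x - k\<bar> * indicator T x)"

lemma lpA: assumes t: "t \<in> E" and [measurable]: "\<psi> \<in> borel_measurable borel" and p: "\<And>x. 0 \<le> \<psi> x" "\<And>x. \<psi> x \<le> 1"
  shows "lebesgue_point (A k \<psi>) t"
proof -
  have si: "set_integrable lebesgue {0..1} \<psi>"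
  proof (rule si01[of 0 1 _ 1])
    show "(\<lambda>x. indicator {0..1} x *\<^sub>R \<psi> x) \<in> borel_measurable lebesgue"
      by (intro measurable_completion) (simp add: measurable_lborel1)
    fix x show "\<bar>\<psi> x\<bar> \<le> 1" using p[of x] by simp
  qed
  have "lebesgue_point (\<lambda>t. LINT x:{0..1}|lebesgue. (\<lambda>v. \<bar>v - k\<bar>) (u t x) * \<psi> x) t"
    by (rule lp_E[OF t _ si]) (intro continuous_intros)
  then show ?thesis by (simp add: A_def[abs_def])
qed

lemma intv:
  assumes ab: "0 \<le> a" "a < b" "b \<le> 1" and eps: "0 < \<epsilon>"
  shows "\<exists>\<delta>>0. \<forall>t\<in>E. t0 < t \<and> t < t0 + \<delta> \<longrightarrow> Lam t k {a..b} \<le> Lam t0 k {a..b} + \<epsilon>"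
proof -
  define B0 where "B0 = M + \<bar>k\<bar>"
  have B0: "0 \<le> B0" using M_nonneg by (simp add: B0_def)
  define e where "e = \<epsilon> / (4 * (B0 + 1))"
  have e: "0 < e" using eps B0 by (simp add: e_def)
  have e2: "2 * e * B0 \<le> \<epsilon> / 2"
  proof -
    have "2 * e * B0 \<le> 2 * e * (B0 + 1)" using e by simp
    also have "\<dots> = \<epsilon> / 2" using B0 by (simp add: e_def field_simps)
    finally show ?thesis .
  qed
  define \<psi> where "\<psi> = psie a b e"
  have sp: "smooth \<psi>" unfolding \<psi>_def by (rule psie_smooth)
  have p0: "\<And>x. 0 \<le> \<psi> x" and p1: "\<And>x. \<psi> x \<le> 1" unfolding \<psi>_def by (rule psie_bounds)+
  have pz: "\<And>x. x \<notin> {a..b} \<Longrightarrow> \<psi> x = 0" unfolding \<psi>_def by (rule psie_zero[OF e])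
  have pm[measurable]: "\<psi> \<in> borel_measurable borel" unfolding \<psi>_def by measurable
  obtain Cb where Cb: "0 \<le> Cb" "\<And>v x. \<bar>v\<bar> \<le> M \<Longrightarrow>
     \<bar>sgn (v - k) * (\<phi> v - \<phi> k) * deriv \<psi> x + \<bar>g v - g k\<bar> * deriv (deriv \<psi>) x\<bar> \<le> Cb * indicator {a..b} x"
    using Cb_exists[OF sp pz, where k=k] by blast
  define \<delta> where "\<delta> = \<epsilon> / (2 * (Cb * (b - a) + 1))"
  have "0 \<le> Cb * (b - a)" using Cb ab by simp
  then have dpos: "0 < \<delta>" using eps unfolding \<delta>_def by (intro divide_pos_pos) auto
  show ?thesis
  proof (intro exI[of _ \<delta>] conjI dpos ballI impI)
    fix t assume t: "t \<in> E" and tt: "t0 < t \<and> t < t0 + \<delta>"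
    have K: "A k \<psi> t \<le> A k \<psi> t0 + Cb * (t - t0) * (b - a)"
      by (rule keyK[OF sp p0 _ _ _ pz Cb]) (use ab tt E_pos[OF t0E] lpA[OF t pm p0 p1] lpA[OF t0E pm p0 p1] in auto)
    have Cd: "Cb * (t - t0) * (b - a) \<le> \<epsilon> / 2"
    proof -
      have "Cb * (t - t0) * (b - a) \<le> (Cb * (b - a) + 1) * \<delta>"
      proof -
        have c: "0 \<le> Cb * (b - a)" using Cb ab by simp
        have "Cb * (t - t0) * (b - a) = (Cb * (b - a)) * (t - t0)" by simp
        also have "\<dots> \<le> (Cb * (b - a)) * \<delta>" using tt c by (intro mult_left_mono) auto
        also have "\<dots> \<le> (Cb * (b - a) + 1) * \<delta>" using dpos by simp
        finally show ?thesis .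
      qed
      also have "\<dots> = \<epsilon> / 2"
      proof -
        have "Cb * (b - a) + 1 > 0" using Cb ab by (simp add: add_nonneg_pos)
        then show ?thesis unfolding \<delta>_def by (simp add: field_simps del: mult_cancel_right)
      qed
      finally show ?thesis .
    qed
    have bt: "\<bar>u \<tau> x - k\<bar> \<le> B0" if "\<tau> \<in> E" for \<tau> x
      using bnd'[OF E_pos[OF that], of x] by (simp add: B0_def)
    have i1: "set_integrable lebesgue {0..1} (\<lambda>x. \<bar>u \<tau> x - k\<bar> * indicator {a..b} x)" if "\<tau> \<in> E" for \<tau>
    proof (rule int_comp[OF that, of "\<lambda>v x. \<bar>v - k\<bar> * indicator {a..b} x" B0, simplified])
      show "(\<lambda>(v, x). \<bar>v - k\<bar> * indicator {a..b} x) \<in> borel_measurable borel" by (rule meas_pair) measurable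
      fix v x assume "\<bar>v\<bar> \<le> M"
      then have "\<bar>v - k\<bar> \<le> B0" by (simp add: B0_def)
      then show "\<bar>v - k\<bar> * indicator {a..b} x \<le> B0" using B0 by (simp add: indicator_def)
    qed
    have i2: "set_integrable lebesgue {0..1} (\<lambda>x. \<bar>u \<tau> x - k\<bar> * \<psi> x)" if "\<tau> \<in> E" for \<tau>
    proof (rule int_comp[OF that, of "\<lambda>v x. \<bar>v - k\<bar> * \<psi> x" B0])
      show "(\<lambda>(v, x). \<bar>v - k\<bar> * \<psi> x) \<in> borel_measurable borel" by (rule meas_pair) measurable
      fix v x :: real assume "\<bar>v\<bar> \<le> M" "x \<in> {0..1}"
      then have "\<bar>v - k\<bar> \<le> B0" by (simp add: B0_def)
      moreover have "\<bar>v - k\<bar> * \<bar>\<psi> x\<bar> \<le> \<bar>v - k\<bar> * 1" using p0[of x] p1[of x] by (intro mult_left_mono) auto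
      ultimately show "\<bar>\<bar>v - k\<bar> * \<psi> x\<bar> \<le> B0" by (simp add: abs_mult)
    qed
    have ii: "set_integrable lebesgue {0..1::real} (\<lambda>x. indicator {l..r} x :: real)" for l r
      by (rule si01[of 0 1 _ 1], intro borel_measurable_scaleR borel_measurable_indicator, auto simp: indicator_def)
    have "Lam t k {a..b} \<le> (LINT x:{0..1}|lebesgue. \<bar>u t x - k\<bar> * \<psi> x + B0 * (indicator {a..a+e} x + indicator {b-e..b} x))"
      unfolding Lam_def
    proof (rule set_integral_mono[OF i1[OF t]])
      show "set_integrable lebesgue {0..1} (\<lambda>x. \<bar>u t x - k\<bar> * \<psi> x + B0 * (indicator {a..a+e} x + indicator {b-e..b} x))"
        by (intro set_integral_add set_integrable_mult_right i2[OF t] ii)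
      fix x
      have "\<bar>u t x - k\<bar> * indicator {a..b} x - \<bar>u t x - k\<bar> * \<psi> x = \<bar>u t x - k\<bar> * (indicator {a..b} x - \<psi> x)"
        by (simp add: algebra_simps)
      also have "\<dots> \<le> B0 * (indicator {a..a+e} x + indicator {b-e..b} x)"
      proof (rule mult_mono)
        show "indicator {a..b} x - \<psi> x \<le> indicator {a..a+e} x + indicator {b-e..b} x"
          unfolding \<psi>_def by (rule psie_gap[OF e])
        show "0 \<le> indicator {a..b} x - \<psi> x" using pz[of x] p1[of x] by (cases "x \<in> {a..b}") auto
      qed (use bt[OF t] B0 in auto)
      finally show "\<bar>u t x - k\<bar> * indicator {a..b} x \<le> \<bar>u t x - k\<bar> * \<psi> x + B0 * (indicator {a..a+e} x + indicator {b-e..b} x)"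
        by simp
    qed
    also have "\<dots> = A k \<psi> t + B0 * ((LINT x:{0..1}|lebesgue. indicator {a..a+e} x) + (LINT x:{0..1}|lebesgue. indicator {b-e..b} x))"
      by (simp add: A_def set_integral_add set_integrable_mult_right i2[OF t] ii set_integral_mult_right)
    also have "\<dots> \<le> A k \<psi> t + B0 * (e + e)"
      using set_int_ind_le[of a "a+e"] set_int_ind_le[of "b-e" b] e B0 by (intro add_left_mono mult_left_mono add_mono) auto
    also have "A k \<psi> t0 \<le> Lam t0 k {a..b}"
      unfolding A_def Lam_def
    proof (rule set_integral_mono[OF i2[OF t0E] i1[OF t0E]])
      fix x show "\<bar>u t0 x - k\<bar> * \<psi> x \<le> \<bar>u t0 x - k\<bar> * indicator {a..b} x"
        using pz[of x] p1[of x] by (cases "x \<in> {a..b}") (auto intro: mult_left_le)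
    qed
    then have "A k \<psi> t \<le> Lam t0 k {a..b} + \<epsilon> / 2" using K Cd by linarith
    then have "A k \<psi> t + B0 * (e + e) \<le> Lam t0 k {a..b} + \<epsilon>" using e2 by (simp add: algebra_simps)
    finally show "Lam t k {a..b} \<le> Lam t0 k {a..b} + \<epsilon>" .
  qed
qed

end

context fin_ctx
begin

abbreviation Fi where "Fi \<equiv> at t0 within (E \<inter> {t0<..})"

lemma ev_delta: "(\<exists>\<delta>>0. \<forall>t\<in>E. t0 < t \<and> t < t0 + \<delta> \<longrightarrow> P t) \<Longrightarrow> eventually P Fi"
  unfolding eventually_at
proof -
  assume "\<exists>\<delta>>0. \<forall>t\<in>E. t0 < t \<and> t < t0 + \<delta> \<longrightarrow> P t"
  then obtain \<delta> where d: "\<delta> > 0" "\<And>t. t \<in> E \<Longrightarrow> t0 < t \<Longrightarrow> t < t0 + \<delta> \<Longrightarrow> P t" by blast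
  show "\<exists>d>0. \<forall>x\<in>E \<inter> {t0<..}. x \<noteq> t0 \<and> dist x t0 < d \<longrightarrow> P x"
    using d by (intro exI[of _ \<delta>]) (auto simp: dist_real_def)
qed

lemma evE: "eventually (\<lambda>t. t \<in> E \<and> t0 < t) Fi"
  by (rule ev_delta) (auto intro: exI[of _ 1])

definition W :: "real \<Rightarrow> real set \<Rightarrow> real" where
  "W t T = (LINT x:{0..1}|lebesgue. u t x * indicator T x)"

lemma intW: assumes t: "t \<in> E" and T: "T \<in> sets lebesgue"
  shows "set_integrable lebesgue {0..1} (\<lambda>x. u t x * indicator T x)"
proof (rule si01[of 0 1 _ M])
  have "(\<lambda>x. (indicator {0..1} x *\<^sub>R u t x) * indicator T x) \<in> borel_measurable lebesgue"
    using E_meas[OF t] T by (intro borel_measurable_times borel_measurable_indicator) auto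
  then show "(\<lambda>x. indicator {0..1} x *\<^sub>R (u t x * indicator T x)) \<in> borel_measurable lebesgue"
    by (simp add: ac_simps)
  fix x show "\<bar>u t x * indicator T x\<bar> \<le> M"
    using bnd'[OF E_pos[OF t], of x] M_nonneg by (simp add: indicator_def)
qed

lemma ii: "set_integrable lebesgue {0..1::real} (\<lambda>x. indicator T x :: real)" if "T \<in> sets lebesgue" for T
  by (rule si01[of 0 1 _ 1], intro borel_measurable_scaleR borel_measurable_indicator) (use that in \<open>auto simp: indicator_def\<close>)

lemma weak_intv:
  assumes ab: "0 \<le> a" "a < b" "b \<le> 1"
  shows "((\<lambda>t. W t {a..b}) \<longlongrightarrow> W t0 {a..b}) Fi"
proof (rule tendstoI)
  fix \<epsilon> :: real assume eps: "0 < \<epsilon>"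
  define I where "I = (LINT x:{0..1}|lebesgue. indicator {a..b} x :: real)"
  have eq1: "Lam t M {a..b} = M * I - W t {a..b}" and eq2: "Lam t (-M) {a..b} = W t {a..b} + M * I"
    if t: "t \<in> E" for t
  proof -
    have iu: "set_integrable lebesgue {0..1} (\<lambda>x. u t x * indicator {a..b} x)" by (rule intW[OF t]) auto
    have ik: "set_integrable lebesgue {0..1} (\<lambda>x. M * indicator {a..b} x :: real)"
      using ii[of "{a..b}"] by (intro set_integrable_mult_right) auto
    have "Lam t M {a..b} = (LINT x:{0..1}|lebesgue. M * indicator {a..b} x - u t x * indicator {a..b} x)"
      unfolding Lam_def
      by (rule set_lebesgue_integral_cong) (use bnd'[OF E_pos[OF t]] in \<open>auto simp: abs_le_iff algebra_simps\<close>)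
    also have "\<dots> = M * I - W t {a..b}"
      using set_integral_diff(2)[OF ik iu] by (simp add: I_def W_def set_integral_mult_right)
    finally show "Lam t M {a..b} = M * I - W t {a..b}" .
    have "Lam t (-M) {a..b} = (LINT x:{0..1}|lebesgue. u t x * indicator {a..b} x + M * indicator {a..b} x)"
      unfolding Lam_def
    proof (rule set_lebesgue_integral_cong)
      show "\<forall>x. x \<in> {0..1} \<longrightarrow> \<bar>u t x - - M\<bar> * indicator {a..b} x = u t x * indicator {a..b} x + M * indicator {a..b} x"
      proof (intro allI impI)
        fix x
        have "\<bar>u t x - - M\<bar> = u t x + M" using bnd'[OF E_pos[OF t], of x] by (simp add: abs_le_iff)
        then show "\<bar>u t x - - M\<bar> * indicator {a..b} x = u t x * indicator {a..b} x + M * indicator {a..b} x"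
          by (simp add: algebra_simps)
      qed
    qed auto
    also have "\<dots> = W t {a..b} + M * I"
      using set_integral_add(2)[OF iu ik] by (simp add: I_def W_def set_integral_mult_right)
    finally show "Lam t (-M) {a..b} = W t {a..b} + M * I" .
  qed
  obtain d1 where d1: "d1 > 0" "\<And>t. t \<in> E \<Longrightarrow> t0 < t \<and> t < t0 + d1 \<Longrightarrow> Lam t M {a..b} \<le> Lam t0 M {a..b} + \<epsilon> / 2"
    using intv[OF ab, of "\<epsilon> / 2" M] eps by auto
  obtain d2 where d2: "d2 > 0" "\<And>t. t \<in> E \<Longrightarrow> t0 < t \<and> t < t0 + d2 \<Longrightarrow> Lam t (-M) {a..b} \<le> Lam t0 (-M) {a..b} + \<epsilon> / 2"
    using intv[OF ab, of "\<epsilon> / 2" "-M"] eps by auto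
  show "\<forall>\<^sub>F t in Fi. dist (W t {a..b}) (W t0 {a..b}) < \<epsilon>"
  proof (rule ev_delta, intro exI[of _ "min d1 d2"] conjI ballI impI)
    show "0 < min d1 d2" using d1 d2 by simp
    fix t assume t: "t \<in> E" and tt: "t0 < t \<and> t < t0 + min d1 d2"
    have "Lam t M {a..b} \<le> Lam t0 M {a..b} + \<epsilon> / 2" using d1(2)[OF t] tt by auto
    moreover have "Lam t (-M) {a..b} \<le> Lam t0 (-M) {a..b} + \<epsilon> / 2" using d2(2)[OF t] tt by auto
    ultimately show "dist (W t {a..b}) (W t0 {a..b}) < \<epsilon>"
      using eq1[OF t] eq2[OF t] eq1[OF t0E] eq2[OF t0E] eps by (simp add: dist_real_def abs_less_iff)
  qed
qed

lemma W_cong: "(\<And>x. x \<in> {0..1} \<Longrightarrow> indicator S x = (indicator T x :: real)) \<Longrightarrow> W t S = W t T"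
  unfolding W_def by (rule set_lebesgue_integral_cong) auto

lemma borel_leb: "S \<in> sets borel \<Longrightarrow> S \<in> sets (lebesgue :: real measure)"
  by (intro sets_completionI_sets) simp

lemma W_single: assumes t: "t \<in> E" shows "W t {c} = 0"
proof -
  have "W t {c} = integral\<^sup>L lebesgue (\<lambda>x. indicator {0..1} x *\<^sub>R (u t x * indicator {c} x))"
    by (simp add: W_def set_lebesgue_integral_def)
  also have "\<dots> = integral\<^sup>L lebesgue (\<lambda>x::real. 0 :: real)"
  proof (rule integral_cong_AE)
    show "(\<lambda>x. indicator {0..1} x *\<^sub>R (u t x * indicator {c} x)) \<in> borel_measurable lebesgue"
      using intW[OF t, of "{c}"] by (simp add: set_integrable_def borel_measurable_integrable)
    have "AE x in lborel. x \<noteq> (c::real)" by (rule AE_lborel_singleton)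
    from AE_completion[OF this]
    show "AE x in lebesgue. indicator {0..1} x *\<^sub>R (u t x * indicator {c} x) = 0"
      by (rule eventually_mono) (auto simp: indicator_def)
  qed simp
  finally show ?thesis by simp
qed

lemma weak_Icc: "a \<le> b \<Longrightarrow> ((\<lambda>t. W t {a..b}) \<longlongrightarrow> W t0 {a..b}) Fi"
proof -
  assume "a \<le> b"
  define a' where "a' = max a 0"
  define b' where "b' = min b 1"
  have c: "W t {a..b} = W t {a'..b'}" for t by (rule W_cong) (auto simp: a'_def b'_def indicator_def)
  show ?thesis unfolding c
  proof (cases "a' < b'")
    case True
    then show "((\<lambda>t. W t {a'..b'}) \<longlongrightarrow> W t0 {a'..b'}) Fi"
      by (intro weak_intv) (auto simp: a'_def b'_def)
  next
    case False
    then consider "a' = b'" | "b' < a'" by linarith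
    then show "((\<lambda>t. W t {a'..b'}) \<longlongrightarrow> W t0 {a'..b'}) Fi"
    proof cases
      case 1
      show ?thesis unfolding 1 atLeastAtMost_singleton
      proof (rule Lim_transform_eventually[OF tendsto_const])
        show "\<forall>\<^sub>F t in Fi. W t0 {b'} = W t {b'}"
          using evE by (rule eventually_mono) (simp add: W_single t0E)
      qed
    next
      case 2 then show ?thesis by (simp add: W_def)
    qed
  qed
qed

lemma weak_borel: "S \<in> sets borel \<Longrightarrow> ((\<lambda>t. W t S) \<longlongrightarrow> W t0 S) Fi"
proof (induction rule: borel_set_induct)
  case empty then show ?case by (simp add: W_def)
next
  case (interval a b) then show ?case by (rule weak_Icc)
next
  case (compl S)
  have SL: "S \<in> sets lebesgue" by (rule borel_leb[OF compl(1)])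
  have eq: "W t (-S) = W t {0..1} - W t S" if t: "t \<in> E" for t
  proof -
    have "W t (-S) = (LINT x:{0..1}|lebesgue. u t x * indicator {0..1} x - u t x * indicator S x)"
      unfolding W_def by (rule set_lebesgue_integral_cong) (auto simp: indicator_def)
    also have "\<dots> = W t {0..1} - W t S" unfolding W_def
      by (rule set_integral_diff(2)[OF intW[OF t] intW[OF t SL]]) auto
    finally show ?thesis .
  qed
  have "((\<lambda>t. W t {0..1} - W t S) \<longlongrightarrow> W t0 {0..1} - W t0 S) Fi"
    by (intro tendsto_diff weak_Icc compl(2)) auto
  then show ?case unfolding eq[OF t0E]
    by (rule Lim_transform_eventually) (use evE in \<open>auto elim: eventually_mono simp: eq\<close>)
next
  case (union f)
  define T where "T = (\<Union>i. f i)"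
  define G where "G N = (\<Union>i\<in>{..<N}. f i)" for N
  have fL: "f i \<in> sets lebesgue" for i using borel_leb[OF union(2)] .
  have GL: "G N \<in> sets lebesgue" for N unfolding G_def using fL by auto
  have TL: "T \<in> sets lebesgue" unfolding T_def using fL by auto
  have GT: "G N \<subseteq> T" for N by (auto simp: G_def T_def)
  have WG: "W t (G N) = (\<Sum>i<N. W t (f i))" if t: "t \<in> E" for t N
  proof -
    have ind: "indicator (G N) x = (\<Sum>i<N. indicator (f i) x :: real)" for x
      unfolding G_def using union(1)
      by (intro indicator_UN_disjoint) (auto simp: disjoint_family_on_def)
    have pw: "indicator {0..1} x *\<^sub>R (u t x * indicator (G N) x) = (\<Sum>i<N. indicator {0..1} x *\<^sub>R (u t x * indicator (f i) x))" for x
      unfolding ind real_scaleR_def by (simp only: sum_distrib_left)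
    have "W t (G N) = integral\<^sup>L lebesgue (\<lambda>x. \<Sum>i<N. indicator {0..1} x *\<^sub>R (u t x * indicator (f i) x))"
      unfolding W_def set_lebesgue_integral_def pw ..
    also have "\<dots> = (\<Sum>i<N. W t (f i))"
      unfolding W_def set_lebesgue_integral_def
      by (rule Bochner_Integration.integral_sum) (use intW[OF t fL] in \<open>auto simp: set_integrable_def\<close>)
    finally show ?thesis .
  qed
  define r where "r N = integral\<^sup>L lebesgue (\<lambda>x. indicator {0..1} x * (indicator T x - indicator (G N) x) :: real)" for N
  have r_lim: "r \<longlonglongrightarrow> 0"
  proof -
    have "(\<lambda>N. integral\<^sup>L lebesgue (\<lambda>x. indicator {0..1} x * (indicator T x - indicator (G N) x) :: real))
       \<longlonglongrightarrow> integral\<^sup>L lebesgue (\<lambda>x::real. 0 :: real)"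
    proof (rule integral_dominated_convergence)
      show "integrable lebesgue (indicator {0..1} :: real \<Rightarrow> real)"
        using ii[of "{0..1}"] by (simp add: set_integrable_def)
      show "(\<lambda>x. indicator {0..1} x * (indicator T x - indicator (G N) x) :: real) \<in> borel_measurable lebesgue" for N
        using TL GL by (intro borel_measurable_times borel_measurable_diff borel_measurable_indicator) auto
      show "AE x in lebesgue. norm (indicator {0..1} x * (indicator T x - indicator (G N) x) :: real) \<le> indicator {0..1} x" for N
        using GT[of N] by (intro AE_I2) (auto simp: indicator_def)
      show "AE x in lebesgue. (\<lambda>N. indicator {0..1} x * (indicator T x - indicator (G N) x) :: real) \<longlonglongrightarrow> 0"
      proof (intro AE_I2)
        fix x :: real
        show "(\<lambda>N. indicator {0..1} x * (indicator T x - indicator (G N) x) :: real) \<longlonglongrightarrow> 0"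
        proof (cases "x \<in> T")
          case True
          then obtain i where i: "x \<in> f i" by (auto simp: T_def)
          have "eventually (\<lambda>N. indicator {0..1} x * (indicator T x - indicator (G N) x) = (0::real)) sequentially"
            using eventually_ge_at_top[of "Suc i"]
            by (rule eventually_mono) (use i True in \<open>auto simp: G_def indicator_def\<close>)
          then show ?thesis by (rule tendsto_eventually)
        next
          case False
          then have "x \<notin> G N" for N using GT by auto
          then show ?thesis using False by (simp add: indicator_def)
        qed
      qed
    qed simp
    then show ?thesis by (simp add: r_def[abs_def])
  qed
  have tail: "\<bar>W t T - W t (G N)\<bar> \<le> M * r N" if t: "t \<in> E" for t N
  proof -
    have "W t T - W t (G N) = (LINT x:{0..1}|lebesgue. u t x * indicator T x - u t x * indicator (G N) x)"
      unfolding W_def by (rule set_integral_diff(2)[symmetric, OF intW[OF t TL] intW[OF t GL]])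
    also have "\<bar>\<dots>\<bar> \<le> (LINT x:{0..1}|lebesgue. M * (indicator T x - indicator (G N) x))"
      unfolding set_lebesgue_integral_def
    proof (rule integral_abs_bound_integral)
      show "integrable lebesgue (\<lambda>x. indicator {0..1} x *\<^sub>R (u t x * indicator T x - u t x * indicator (G N) x))"
        using set_integral_diff(1)[OF intW[OF t TL] intW[OF t GL]] by (simp add: set_integrable_def)
      show "integrable lebesgue (\<lambda>x. indicator {0..1} x *\<^sub>R (M * (indicator T x - indicator (G N) x)))"
      proof -
        have "integrable lebesgue (\<lambda>x. indicator {0..1} x *\<^sub>R (indicator T x - indicator (G N) x) :: real)"
          using set_integral_diff(1)[OF ii[OF TL] ii[OF GL]] by (simp add: set_integrable_def)
        from Bochner_Integration.integrable_mult_right[OF this, of M]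
        show ?thesis by (simp add: ac_simps)
      qed
      fix x
      have "\<bar>u t x\<bar> \<le> M" using bnd'[OF E_pos[OF t]] by simp
      then show "\<bar>indicator {0..1} x *\<^sub>R (u t x * indicator T x - u t x * indicator (G N) x)\<bar>
          \<le> indicator {0..1} x *\<^sub>R (M * (indicator T x - indicator (G N) x))"
        using GT[of N] by (auto simp: indicator_def)
    qed
    also have "\<dots> = M * r N" by (simp add: r_def set_lebesgue_integral_def ac_simps)
    finally show ?thesis .
  qed
  have r0: "0 \<le> r N" for N unfolding r_def
    using GT[of N] by (intro Bochner_Integration.integral_nonneg) (auto simp: indicator_def)
  show ?case unfolding T_def[symmetric]
  proof (rule tendstoI)
    fix \<epsilon> :: real assume eps: "0 < \<epsilon>"
    obtain N where N: "M * r N < \<epsilon> / 3"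
    proof -
      have "(\<lambda>N. M * r N) \<longlonglongrightarrow> M * 0" by (intro tendsto_intros r_lim)
      then have "eventually (\<lambda>N. M * r N < \<epsilon> / 3) sequentially"
        using eps by (intro order_tendstoD) auto
      then show ?thesis using that by (auto simp: eventually_sequentially)
    qed
    have lim: "((\<lambda>t. W t (G N)) \<longlongrightarrow> W t0 (G N)) Fi"
    proof -
      have "((\<lambda>t. \<Sum>i<N. W t (f i)) \<longlongrightarrow> (\<Sum>i<N. W t0 (f i))) Fi"
        by (intro tendsto_sum union(3))
      then show ?thesis unfolding WG[OF t0E]
        by (rule Lim_transform_eventually) (use evE in \<open>auto elim: eventually_mono simp: WG\<close>)
    qed
    have "\<forall>\<^sub>F t in Fi. dist (W t (G N)) (W t0 (G N)) < \<epsilon> / 3"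
      using lim eps by (intro tendstoD) auto
    then show "\<forall>\<^sub>F t in Fi. dist (W t T) (W t0 T) < \<epsilon>"
      using evE
    proof (eventually_elim)
      case (elim t)
      then have t: "t \<in> E" by auto
      have a: "\<bar>W t (G N) - W t0 (G N)\<bar> < \<epsilon> / 3" using elim(1) by (simp add: dist_real_def)
      have b: "\<bar>W t T - W t (G N)\<bar> \<le> M * r N" "\<bar>W t0 T - W t0 (G N)\<bar> \<le> M * r N"
        using tail[OF t, of N] tail[OF t0E, of N] by auto
      show ?case using a b N unfolding dist_real_def abs_less_iff abs_le_iff by linarith
    qed
  qed
qed

lemma weak_leb: assumes T: "T \<in> sets lebesgue" shows "((\<lambda>t. W t T) \<longlongrightarrow> W t0 T) Fi"
proof -
  have "(indicator T :: real \<Rightarrow> real) \<in> borel_measurable lebesgue" using T by simp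
  from completion_ex_borel_measurable_real[OF this] obtain g where
    g: "g \<in> borel_measurable lborel" "AE x in lborel. (indicator T x :: real) = g x" by blast
  define S where "S = {x. g x = 1}"
  have S: "S \<in> sets borel" unfolding S_def using g(1) by (simp add: measurable_lborel1)
  have ae: "AE x in lebesgue. indicator T x = (indicator S x :: real)"
    using AE_completion[OF g(2)]
  proof (rule eventually_mono)
    fix x assume h: "(indicator T x :: real) = g x"
    show "indicator T x = (indicator S x :: real)"
      using h by (cases "x \<in> T") (auto simp: S_def indicator_def)
  qed
  have eq: "W t T = W t S" if t: "t \<in> E" for t
    unfolding W_def set_lebesgue_integral_def
  proof (rule integral_cong_AE)
    show "(\<lambda>x. indicator {0..1} x *\<^sub>R (u t x * indicator T x)) \<in> borel_measurable lebesgue"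
      using intW[OF t T] by (simp add: set_integrable_def borel_measurable_integrable)
    show "(\<lambda>x. indicator {0..1} x *\<^sub>R (u t x * indicator S x)) \<in> borel_measurable lebesgue"
      using intW[OF t borel_leb[OF S]] by (simp add: set_integrable_def borel_measurable_integrable)
    show "AE x in lebesgue. indicator {0..1} x *\<^sub>R (u t x * indicator T x) = indicator {0..1} x *\<^sub>R (u t x * indicator S x)"
      using ae by (rule eventually_mono) simp
  qed
  show ?thesis unfolding eq[OF t0E]
    by (rule Lim_transform_eventually[OF weak_borel[OF S]]) (use evE in \<open>auto elim: eventually_mono simp: eq\<close>)
qed

end

context fin_ctx
begin

lemma abs_int: assumes t: "t \<in> E" shows "set_integrable lebesgue {0..1} (\<lambda>x. \<bar>u t x - k\<bar>)"
proof (rule int_comp[OF t, of "\<lambda>v x. \<bar>v - k\<bar>" "M + \<bar>k\<bar>"])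
  show "(\<lambda>(v, x::real). \<bar>v - k\<bar>) \<in> borel_measurable borel" by (rule meas_pair) measurable
qed auto

lemma Lam01: "Lam t k {0..1} = (LINT x:{0..1}|lebesgue. \<bar>u t x - k\<bar>)"
  unfolding Lam_def by (rule set_lebesgue_integral_cong) auto

lemma term_int:
  assumes t: "t \<in> E" and P: "P \<in> sets lebesgue" and Q: "Q \<in> sets lebesgue"
  shows "set_integrable lebesgue {0..1} (\<lambda>x. (indicator Q x - indicator P x) * (u t x - k))"
    "(LINT x:{0..1}|lebesgue. (indicator Q x - indicator P x) * (u t x - k)) =
      W t Q - W t P - (k * (LINT x:{0..1}|lebesgue. indicator Q x) - k * (LINT x:{0..1}|lebesgue. indicator P x))"
proof -
  have e: "(\<lambda>x. (indicator Q x - indicator P x) * (u t x - k)) =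
     (\<lambda>x. (u t x * indicator Q x - u t x * indicator P x) - (k * indicator Q x - k * indicator P x))"
    by (auto simp: fun_eq_iff algebra_simps)
  have i1: "set_integrable lebesgue {0..1} (\<lambda>x. u t x * indicator Q x - u t x * indicator P x)"
    by (rule set_integral_diff(1)[OF intW[OF t Q] intW[OF t P]])
  have iQ: "set_integrable lebesgue {0..1} (\<lambda>x. k * indicator Q x :: real)"
    using ii[OF Q] by (intro set_integrable_mult_right) auto
  have iP: "set_integrable lebesgue {0..1} (\<lambda>x. k * indicator P x :: real)"
    using ii[OF P] by (intro set_integrable_mult_right) auto
  have i2: "set_integrable lebesgue {0..1} (\<lambda>x. k * indicator Q x - k * indicator P x :: real)"
    by (rule set_integral_diff(1)[OF iQ iP])
  show "set_integrable lebesgue {0..1} (\<lambda>x. (indicator Q x - indicator P x) * (u t x - k))"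
    unfolding e by (rule set_integral_diff(1)[OF i1 i2])
  have "(LINT x:{0..1}|lebesgue. (indicator Q x - indicator P x) * (u t x - k)) =
      (LINT x:{0..1}|lebesgue. u t x * indicator Q x - u t x * indicator P x) - (LINT x:{0..1}|lebesgue. k * indicator Q x - k * indicator P x)"
    unfolding e by (rule set_integral_diff(2)[OF i1 i2])
  also have "\<dots> = W t Q - W t P - (k * (LINT x:{0..1}|lebesgue. indicator Q x) - k * (LINT x:{0..1}|lebesgue. indicator P x))"
    unfolding W_def set_integral_diff(2)[OF intW[OF t Q] intW[OF t P]] set_integral_diff(2)[OF iQ iP]
    by (simp add: set_integral_mult_right)
  finally show "(LINT x:{0..1}|lebesgue. (indicator Q x - indicator P x) * (u t x - k)) =
      W t Q - W t P - (k * (LINT x:{0..1}|lebesgue. indicator Q x) - k * (LINT x:{0..1}|lebesgue. indicator P x))" .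
qed

lemma Y_lim:
  assumes P: "P \<in> sets lebesgue" and Q: "Q \<in> sets lebesgue"
  shows "((\<lambda>t. LINT x:{0..1}|lebesgue. (indicator Q x - indicator P x) * (u t x - k)) \<longlongrightarrow>
          (LINT x:{0..1}|lebesgue. (indicator Q x - indicator P x) * (u t0 x - k))) Fi"
proof -
  define c where "c = k * (LINT x:{0..1}|lebesgue. indicator Q x :: real) - k * (LINT x:{0..1}|lebesgue. indicator P x)"
  have "((\<lambda>t. W t Q - W t P - c) \<longlongrightarrow> W t0 Q - W t0 P - c) Fi"
    by (intro tendsto_intros weak_leb P Q)
  then show ?thesis unfolding term_int(2)[OF t0E P Q, of k] c_def[symmetric]
    by (rule Lim_transform_eventually)
      (use evE in \<open>auto elim!: eventually_mono simp: term_int(2)[OF _ P Q] c_def\<close>)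
qed

lemma Lam_lim: "\<eta> > 0 \<Longrightarrow> eventually (\<lambda>t. Lam t k {0..1} \<le> Lam t0 k {0..1} + \<eta>) Fi"
  by (rule ev_delta) (use intv[of 0 1 \<eta> k] in auto)

theorem main: "((\<lambda>t. LINT x:{0..1}|lebesgue. \<bar>u t x - u t0 x\<bar>) \<longlongrightarrow> 0) Fi"
proof (rule tendstoI)
  fix \<epsilon> :: real assume eps: "0 < \<epsilon>"
  define d where "d = \<epsilon> / 4"
  have d: "0 < d" using eps by (simp add: d_def)
  define U0 where "U0 x = indicator {0..1} x *\<^sub>R u t0 x" for x
  have U0m[measurable]: "U0 \<in> borel_measurable lebesgue" unfolding U0_def[abs_def] by (rule E_meas[OF t0E])
  have U0u: "x \<in> {0..1} \<Longrightarrow> U0 x = u t0 x" for x by (simp add: U0_def)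
  have U0b: "\<bar>U0 x\<bar> \<le> M" for x using bnd'[OF E_pos[OF t0E], of x] M_nonneg by (simp add: U0_def indicator_def)
  define Nj where "Nj = nat \<lceil>2 * M / d\<rceil>"
  define J where "J = {0..Nj}"
  have fJ: "finite J" and cJ: "card J = Suc Nj" by (simp_all add: J_def)
  define k where "k j = - M + real j * d" for j :: nat
  define S where "S j = {x. k j \<le> U0 x \<and> U0 x < k j + d}" for j
  define P where "P j = {x. \<not> (k j \<le> U0 x \<and> U0 x < k j + d) \<and> k j < U0 x}" for j
  define Q where "Q j = {x. \<not> (k j \<le> U0 x \<and> U0 x < k j + d) \<and> U0 x < k j}" for j
  have SL: "S j \<in> sets lebesgue" for j
  proof -
    have "{x \<in> space lebesgue. k j \<le> U0 x \<and> U0 x < k j + d} \<in> sets lebesgue" by measurable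
    then show ?thesis by (simp add: S_def)
  qed
  have PL: "P j \<in> sets lebesgue" for j
  proof -
    have "{x \<in> space lebesgue. \<not> (k j \<le> U0 x \<and> U0 x < k j + d) \<and> k j < U0 x} \<in> sets lebesgue" by measurable
    then show ?thesis by (simp add: P_def)
  qed
  have QL: "Q j \<in> sets lebesgue" for j
  proof -
    have "{x \<in> space lebesgue. \<not> (k j \<le> U0 x \<and> U0 x < k j + d) \<and> U0 x < k j} \<in> sets lebesgue" by measurable
    then show ?thesis by (simp add: Q_def)
  qed
  define j0 where "j0 x = nat \<lfloor>(U0 x + M) / d\<rfloor>" for x
  have j0S: "x \<in> S (j0 x)" and j0J: "j0 x \<in> J" for x
  proof -
    have nn: "0 \<le> (U0 x + M) / d" using U0b[of x] d by (simp add: abs_le_iff)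
    then have fl: "0 \<le> \<lfloor>(U0 x + M) / d\<rfloor>" by simp
    then have rj: "real (j0 x) = real_of_int \<lfloor>(U0 x + M) / d\<rfloor>" by (simp add: j0_def)
    have "real (j0 x) \<le> (U0 x + M) / d" "(U0 x + M) / d < real (j0 x) + 1"
      unfolding rj by linarith+
    then have "real (j0 x) * d \<le> U0 x + M" "U0 x + M < (real (j0 x) + 1) * d"
      using d by (simp_all add: field_simps)
    then show "x \<in> S (j0 x)" by (simp add: S_def k_def algebra_simps)
    have "(U0 x + M) / d \<le> 2 * M / d" using U0b[of x] d by (intro divide_right_mono) (auto simp: abs_le_iff)
    then have "\<lfloor>(U0 x + M) / d\<rfloor> \<le> \<lceil>2 * M / d\<rceil>"
      by (meson floor_le_ceiling floor_mono order_trans)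
    then show "j0 x \<in> J" unfolding J_def j0_def Nj_def using fl by (simp add: nat_mono)
  qed
  have Suniq: "x \<in> S j \<Longrightarrow> j = j0 x" for x j
  proof -
    assume "x \<in> S j"
    then have a: "real j * d \<le> U0 x + M" "U0 x + M < (real j + 1) * d" by (simp_all add: S_def k_def algebra_simps)
    have "real j \<le> (U0 x + M) / d" "(U0 x + M) / d < real j + 1"
      using a d by (simp_all add: field_simps)
    then have "\<lfloor>(U0 x + M) / d\<rfloor> = int j" by (simp add: floor_eq_iff)
    then show "j = j0 x" by (simp add: j0_def)
  qed
  define tm where "tm j t x = \<bar>u t x - k j\<bar> + (indicator (Q j) x - indicator (P j) x) * (u t x - k j)" for j t x
  have term_nonneg: "x \<notin> S j \<Longrightarrow> 0 \<le> tm j t x" for j t x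
    by (auto simp: tm_def P_def Q_def S_def indicator_def)
  have P1: "\<bar>u t x - u t0 x\<bar> \<le> d + (\<Sum>j\<in>J. tm j t x)" if x: "x \<in> {0..1}" for t x
  proof -
    have s0: "x \<in> S (j0 x)" by (rule j0S)
    then have "x \<notin> P (j0 x)" "x \<notin> Q (j0 x)" by (auto simp: S_def P_def Q_def)
    then have tj0: "tm (j0 x) t x = \<bar>u t x - k (j0 x)\<bar>" by (simp add: tm_def)
    have "\<bar>u t0 x - k (j0 x)\<bar> \<le> d" using s0 U0u[OF x] by (auto simp: S_def)
    then have "\<bar>u t x - u t0 x\<bar> \<le> d + tm (j0 x) t x" unfolding tj0 by linarith
    also have "tm (j0 x) t x \<le> (\<Sum>j\<in>J. tm j t x)"
    proof (rule member_le_sum[OF j0J _ fJ])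
      fix j assume "j \<in> J - {j0 x}"
      then have "x \<notin> S j" using Suniq by blast
      then show "0 \<le> tm j t x" by (rule term_nonneg)
    qed
    finally show ?thesis by simp
  qed
  have P2: "(\<Sum>j\<in>J. tm j t0 x) \<le> d" if x: "x \<in> {0..1}" for x
  proof -
    have "tm j t0 x = (if j = j0 x then \<bar>u t0 x - k j\<bar> else 0)" if "j \<in> J" for j
    proof (cases "j = j0 x")
      case True
      then have "x \<in> S j" using j0S by simp
      then show ?thesis using True by (auto simp: tm_def P_def Q_def S_def)
    next
      case False
      then have "x \<notin> S j" using Suniq by blast
      then show ?thesis using False U0u[OF x] by (auto simp: tm_def P_def Q_def S_def indicator_def)
    qed
    then have "(\<Sum>j\<in>J. tm j t0 x) = (\<Sum>j\<in>J. if j = j0 x then \<bar>u t0 x - k j\<bar> else 0)"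
      by (intro sum.cong) auto
    also have "\<dots> = \<bar>u t0 x - k (j0 x)\<bar>" using j0J[of x] fJ by (simp add: sum.delta)
    also have "\<dots> \<le> d" using j0S[of x] U0u[OF x] by (auto simp: S_def)
    finally show ?thesis .
  qed
  define Y where "Y j t = (LINT x:{0..1}|lebesgue. (indicator (Q j) x - indicator (P j) x) * (u t x - k j))" for j t
  define R where "R t = (\<Sum>j\<in>J. Lam t (k j) {0..1} + Y j t)" for t
  have termi: "set_integrable lebesgue {0..1} (tm j t)" if t: "t \<in> E" for j t
    unfolding tm_def[abs_def] by (intro set_integral_add(1) abs_int[OF t] term_int(1)[OF t PL QL])
  have termI: "(LINT x:{0..1}|lebesgue. tm j t x) = Lam t (k j) {0..1} + Y j t" if t: "t \<in> E" for j t
    unfolding tm_def Lam01 Y_def by (rule set_integral_add(2)[OF abs_int[OF t] term_int(1)[OF t PL QL]])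
  have sumI: "(LINT x:{0..1}|lebesgue. (\<Sum>j\<in>J. tm j t x)) = R t" if t: "t \<in> E" for t
  proof -
    have "(LINT x:{0..1}|lebesgue. (\<Sum>j\<in>J. tm j t x)) = (\<Sum>j\<in>J. LINT x:{0..1}|lebesgue. tm j t x)"
      unfolding set_lebesgue_integral_def scaleR_sum_right
      by (rule Bochner_Integration.integral_sum) (use termi[OF t] in \<open>auto simp: set_integrable_def\<close>)
    then show ?thesis by (simp add: R_def termI[OF t])
  qed
  have sumi: "set_integrable lebesgue {0..1} (\<lambda>x. \<Sum>j\<in>J. tm j t x)" if t: "t \<in> E" for t
    unfolding set_integrable_def scaleR_sum_right
    by (rule Bochner_Integration.integrable_sum) (use termi[OF t] in \<open>auto simp: set_integrable_def\<close>)
  have one: "set_integrable lebesgue {0..1::real} (\<lambda>x. d)"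
    using ii[of "{0..1}"] by (intro set_integrable_mult_right[where a=d, of lebesgue "{0..1}" "\<lambda>_. 1", simplified]) auto
  have int1: "(LINT x:{0..1::real}|lebesgue. d) = d"
  proof -
    have "(LINT x:{0..1::real}|lebesgue. d) = d * integral\<^sup>L lebesgue (indicator {0..1} :: real \<Rightarrow> real)"
      by (simp add: set_lebesgue_integral_def)
    also have "\<dots> = d" using int_ind_Icc[of 0 1] by simp
    finally show ?thesis .
  qed
  have R0: "R t0 \<le> d"
  proof -
    have "R t0 \<le> (LINT x:{0..1::real}|lebesgue. d)"
      unfolding sumI[OF t0E, symmetric] using set_integral_mono[OF sumi[OF t0E] one] P2 by blast
    then show ?thesis using int1 by simp
  qed
  define \<eta> where "\<eta> = d / (2 * real (card J))"
  have eta: "0 < \<eta>" using d cJ by (simp add: \<eta>_def)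
  have ev: "\<forall>\<^sub>F t in Fi. \<forall>j\<in>J. Lam t (k j) {0..1} \<le> Lam t0 (k j) {0..1} + \<eta> \<and> Y j t \<le> Y j t0 + \<eta>"
  proof (rule eventually_ball_finite[OF fJ], intro ballI eventually_conj)
    fix j assume "j \<in> J"
    show "\<forall>\<^sub>F t in Fi. Lam t (k j) {0..1} \<le> Lam t0 (k j) {0..1} + \<eta>" by (rule Lam_lim[OF eta])
    have "((\<lambda>t. Y j t) \<longlongrightarrow> Y j t0) Fi" unfolding Y_def by (rule Y_lim[OF PL QL])
    then have "\<forall>\<^sub>F t in Fi. dist (Y j t) (Y j t0) < \<eta>" using eta by (rule tendstoD)
    then show "\<forall>\<^sub>F t in Fi. Y j t \<le> Y j t0 + \<eta>"
      by (rule eventually_mono) (simp add: dist_real_def abs_less_iff)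
  qed
  show "\<forall>\<^sub>F t in Fi. dist (LINT x:{0..1}|lebesgue. \<bar>u t x - u t0 x\<bar>) 0 < \<epsilon>"
    using ev evE
  proof eventually_elim
    case (elim t)
    then have t: "t \<in> E" and tj: "\<And>j. j \<in> J \<Longrightarrow> Lam t (k j) {0..1} + Y j t \<le> (Lam t0 (k j) {0..1} + Y j t0) + 2 * \<eta>"
      by auto
    have Dm: "(\<lambda>x. indicator {0..1} x *\<^sub>R \<bar>u t x - u t0 x\<bar>) \<in> borel_measurable lebesgue"
    proof -
      have "(\<lambda>x. \<bar>indicator {0..1} x *\<^sub>R u t x - indicator {0..1} x *\<^sub>R u t0 x\<bar>) \<in> borel_measurable lebesgue"
        using E_meas[OF t] E_meas[OF t0E] by measurable
      moreover have "(\<lambda>x. \<bar>indicator {0..1} x *\<^sub>R u t x - indicator {0..1} x *\<^sub>R u t0 x\<bar>) = (\<lambda>x. indicator {0..1} x *\<^sub>R \<bar>u t x - u t0 x\<bar>)"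
        by (auto simp: fun_eq_iff indicator_def)
      ultimately show ?thesis by simp
    qed
    have Di: "set_integrable lebesgue {0..1} (\<lambda>x. \<bar>u t x - u t0 x\<bar>)"
    proof (rule si01[OF Dm, of "2 * M"])
      fix x
      have "\<bar>u t x\<bar> \<le> M" "\<bar>u t0 x\<bar> \<le> M" using bnd'[OF E_pos[OF t]] bnd'[OF E_pos[OF t0E]] by auto
      then show "\<bar>\<bar>u t x - u t0 x\<bar>\<bar> \<le> 2 * M" by simp
    qed
    have "(LINT x:{0..1}|lebesgue. \<bar>u t x - u t0 x\<bar>) \<le> (LINT x:{0..1}|lebesgue. d + (\<Sum>j\<in>J. tm j t x))"
      by (rule set_integral_mono[OF Di set_integral_add(1)[OF one sumi[OF t]] P1])
    also have "\<dots> = d + R t" using set_integral_add(2)[OF one sumi[OF t]] int1 sumI[OF t] by simp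
    also have "R t \<le> R t0 + real (card J) * (2 * \<eta>)"
    proof -
      have "R t \<le> (\<Sum>j\<in>J. (Lam t0 (k j) {0..1} + Y j t0) + 2 * \<eta>)"
        unfolding R_def by (rule sum_mono[OF tj])
      also have "\<dots> = R t0 + real (card J) * (2 * \<eta>)" by (simp add: R_def sum.distrib)
      finally show ?thesis .
    qed
    also have "real (card J) * (2 * \<eta>) = d"
    proof -
      have "real (card J) > 0" using cJ by simp
      then show ?thesis by (simp add: \<eta>_def)
    qed
    finally have up: "(LINT x:{0..1}|lebesgue. \<bar>u t x - u t0 x\<bar>) \<le> 3 * d" using R0 by linarith
    have lo: "0 \<le> (LINT x:{0..1}|lebesgue. \<bar>u t x - u t0 x\<bar>)"
      unfolding set_lebesgue_integral_def by (rule Bochner_Integration.integral_nonneg) (simp add: indicator_def)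
    show ?case using up lo eps by (simp add: dist_real_def d_def)
  qed
qed

end

theorem lemma4:
  fixes \<phi> g u0 :: "real \<Rightarrow> real" and u :: "real \<Rightarrow> real \<Rightarrow> real" and M t0 :: real
    and E :: "real set"
  assumes "continuous_on UNIV \<phi>" and "continuous_on UNIV g" and "mono g"
    and "\<forall>x. u0 (x + 1) = u0 x"
    and "u0 \<in> borel_measurable lebesgue"
    and "\<exists>C. AE x in lebesgue. \<bar>u0 x\<bar> \<le> C"
    and "entropy_solution \<phi> g u0 u"
    and "M = ess_norm_Pi u"
    and "\<forall>t x. t > 0 \<longrightarrow> \<bar>u t x\<bar> \<le> M"
    and "E = common_lebesgue_points u M"
    and "t0 \<in> E"
  shows "((\<lambda>t. LINT x:{0..1}|lebesgue. \<bar>u t x - u t0 x\<bar>) \<longlongrightarrow> 0)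
           (at t0 within (E \<inter> {t0<..}))"
  proof -
  interpret fin_ctx \<phi> g u0 u M E t0
    using assms by unfold_locales auto
  show ?thesis by (rule main)
qed

end
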